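(* Let $T_0$ be an IET satisfying the BC Condition and let $\omega\in E_{cs}(T_0)$. Then for every $x\in[0,1]$ there exists a sequence $(m_k)_{k\in\mathbb Z}$ of integers with $|m_k|\to\infty$ as $|k|\to\infty$ such that $$\sup_{k\in\mathbb Z}\big|S^{T_0}_{m_k}f_{T_0,\omega}(x)\big|<+\infty.$$
   Context: IETs are on $[0,1)$ with $d\ge 2$ intervals $I_\alpha$ labelled by $\mathcal A$. For $\omega\in\mathbb R^{\mathcal A}$, let $f_{T_0,\omega}(x)=\omega_\alpha$ for $x\in I_\alpha$. Birkhoff sums are defined by - $S_nf=\sum_{j=0}^{n-1}f\circ T_0^j$ for $n>0$, - $S_0f=0$, - $S_nf=\sum_{j=n}^{-1}f\circ T_0^{j}$ for $n<0$. Rauzy–Veech/Zorich induction gives nested intervals $I^{(n)}$, return times $q^{(n)}_\alpha$ and incidence (height cocycle) matrices $Z_{m,n}\in SL(d,\mathbb Z)$. Here $(Z_{m,n})_{\alpha\beta}$ counts the visits to $I^{(m)}_\beta$ of an orbit starting in $I^{(n)}_\alpha$ before it returns to $I^{(n)}$. $E_s(T_0)\subset E_{cs}(T_0)$ are the Oseledets subspaces of negative, respectively nonpositive, Lyapunov exponents of $Z$ over the Zorich map. $\gamma(T_0)$ is $\infty$-complete if each symbol is a winner infinitely often in the Rauzy path. BC Condition: $T_0$ satisfies Keane's condition, is Oseledets generic, $\gamma(T_0)$ is $\infty$-complete, and there is a sequence $(n_k)$ such that: (i) there exist $N\in\mathbb N$ and $K>0$ with $1\le (Z_{n_k,n_k+N})_{\alpha\beta}\le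 K$ for all $\alpha,\beta$ and all $k$; (ii) there exists $V>0$ with $\|Z_{0,n_k}|_{E_{cs}(T_0)}\|\le V$ for all $k$. *)

theory Defs
  imports "HOL-Analysis.Analysis"
begin

text \<open>Combinatorial/length data of an IET on an alphabet 'a (finite type).
  pt, pb : positions of the symbols in the top / bottom row (0-based),
  lam : lengths.  The IET lives on [0, sum lam).\<close>

type_synonym ('a) iet_data = "('a \<Rightarrow> nat) \<times> ('a \<Rightarrow> nat) \<times> ('a \<Rightarrow> real)"

definition valid_iet :: "('a::finite \<Rightarrow> nat) \<Rightarrow> ('a \<Rightarrow> nat) \<Rightarrow> ('a \<Rightarrow> real) \<Rightarrow> bool" where
  "valid_iet pt pb lam \<longleftrightarrow> CARD('a) \<ge> 2 \<and>
     bij_betw pt UNIV {..<CARD('a)} \<and> bij_betw pb UNIV {..<CARD('a)} \<and>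
     (\<forall>a. lam a > 0) \<and> sum lam UNIV = 1"

definition lpos :: "('a::finite \<Rightarrow> nat) \<Rightarrow> ('a \<Rightarrow> real) \<Rightarrow> 'a \<Rightarrow> real" where
  "lpos p lam a = (\<Sum>b | p b < p a. lam b)"

definition subint :: "('a::finite \<Rightarrow> nat) \<Rightarrow> ('a \<Rightarrow> real) \<Rightarrow> 'a \<Rightarrow> real set" where
  "subint p lam a = {lpos p lam a ..< lpos p lam a + lam a}"

text \<open>The IET T_0 (identity outside [0,1)) and its inverse.\<close>
definition iet_map :: "('a::finite \<Rightarrow> nat) \<Rightarrow> ('a \<Rightarrow> nat) \<Rightarrow> ('a \<Rightarrow> real) \<Rightarrow> real \<Rightarrow> real" where
  "iet_map pt pb lam x = x + (\<Sum>a\<in>UNIV. if x \<in> subint pt lam a then lpos pb lam a - lpos pt lam a else 0)"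

definition iet_inv :: "('a::finite \<Rightarrow> nat) \<Rightarrow> ('a \<Rightarrow> nat) \<Rightarrow> ('a \<Rightarrow> real) \<Rightarrow> real \<Rightarrow> real" where
  "iet_inv pt pb lam x = x + (\<Sum>a\<in>UNIV. if x \<in> subint pb lam a then lpos pt lam a - lpos pb lam a else 0)"

definition f_iet :: "('a::finite \<Rightarrow> nat) \<Rightarrow> ('a \<Rightarrow> real) \<Rightarrow> ('a \<Rightarrow> real) \<Rightarrow> real \<Rightarrow> real" where
  "f_iet pt lam \<omega> x = (\<Sum>a\<in>UNIV. if x \<in> subint pt lam a then \<omega> a else 0)"

definition birkhoff :: "('a::finite \<Rightarrow> nat) \<Rightarrow> ('a \<Rightarrow> nat) \<Rightarrow> ('a \<Rightarrow> real) \<Rightarrow> (real \<Rightarrow> real) \<Rightarrow> int \<Rightarrow> real \<Rightarrow> real" where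
  "birkhoff pt pb lam g n x =
     (if n \<ge> 0 then (\<Sum>j<nat n. g ((iet_map pt pb lam ^^ j) x))
      else (\<Sum>i\<in>{1..nat (- n)}. g ((iet_inv pt pb lam ^^ i) x)))"

definition keane :: "('a::finite \<Rightarrow> nat) \<Rightarrow> ('a \<Rightarrow> nat) \<Rightarrow> ('a \<Rightarrow> real) \<Rightarrow> bool" where
  "keane pt pb lam \<longleftrightarrow> (\<forall>a b m. pt a \<noteq> 0 \<longrightarrow> pt b \<noteq> 0 \<longrightarrow> m \<ge> 1 \<longrightarrow>
      (iet_map pt pb lam ^^ m) (lpos pt lam a) \<noteq> lpos pt lam b)"

definition last_sym :: "('a::finite \<Rightarrow> nat) \<Rightarrow> 'a" where
  "last_sym p = (THE a. p a = CARD('a) - 1)"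

definition top_type :: "('a::finite) iet_data \<Rightarrow> bool" where
  "top_type s = (case s of (pt, pb, lam) \<Rightarrow> lam (last_sym pt) > lam (last_sym pb))"

definition rv_winner :: "('a::finite) iet_data \<Rightarrow> 'a" where
  "rv_winner s = (case s of (pt, pb, lam) \<Rightarrow>
     (if top_type s then last_sym pt else last_sym pb))"

definition rv_step :: "('a::finite) iet_data \<Rightarrow> 'a iet_data" where
  "rv_step s = (case s of (pt, pb, lam) \<Rightarrow>
     (let wt = last_sym pt; wb = last_sym pb in
      if lam wt > lam wb then
        (pt,
         (\<lambda>b. if b = wb then pb wt + 1 else if pb b > pb wt then pb b + 1 else pb b),
         lam(wt := lam wt - lam wb))
      else
        ((\<lambda>b. if b = wt then pt wb + 1 else if pt b > pt wb then pt b + 1 else pt b),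
         pb,
         lam(wb := lam wb - lam wt))))"

primrec rv :: "('a::finite) iet_data \<Rightarrow> nat \<Rightarrow> 'a iet_data" where
  "rv s 0 = s"
| "rv s (Suc n) = rv_step (rv s n)"

primrec ztime :: "('a::finite) iet_data \<Rightarrow> nat \<Rightarrow> nat" where
  "ztime s 0 = 0"
| "ztime s (Suc k) = (LEAST n. n > ztime s k \<and> top_type (rv s n) \<noteq> top_type (rv s (ztime s k)))"

definition inf_complete :: "('a::finite) iet_data \<Rightarrow> bool" where
  "inf_complete s \<longleftrightarrow> (\<forall>a. \<exists>\<^sub>\<infinity>n. rv_winner (rv s n) = a)"

definition zdata :: "('a::finite) iet_data \<Rightarrow> nat \<Rightarrow> 'a iet_data" where
  "zdata s n = rv s (ztime s n)"

definition ind_len :: "('a::finite) iet_data \<Rightarrow> nat \<Rightarrow> real" where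
  "ind_len s n = (case zdata s n of (pt, pb, lam) \<Rightarrow> sum lam UNIV)"

definition ind_left :: "('a::finite) iet_data \<Rightarrow> nat \<Rightarrow> 'a \<Rightarrow> real" where
  "ind_left s n a = (case zdata s n of (pt, pb, lam) \<Rightarrow> lpos pt lam a)"

definition ind_sub :: "('a::finite) iet_data \<Rightarrow> nat \<Rightarrow> 'a \<Rightarrow> real set" where
  "ind_sub s n a = (case zdata s n of (pt, pb, lam) \<Rightarrow> subint pt lam a)"

definition T0 :: "('a::finite) iet_data \<Rightarrow> real \<Rightarrow> real" where
  "T0 s = (case s of (pt, pb, lam) \<Rightarrow> iet_map pt pb lam)"

definition ret_time :: "('a::finite) iet_data \<Rightarrow> nat \<Rightarrow> real \<Rightarrow> nat" where
  "ret_time s n x = (LEAST j. j > 0 \<and> (T0 s ^^ j) x \<in> {0..<ind_len s n})"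

definition Zmat :: "('a::finite) iet_data \<Rightarrow> nat \<Rightarrow> nat \<Rightarrow> 'a \<Rightarrow> 'a \<Rightarrow> nat" where
  "Zmat s m n a b = card {j. j < ret_time s n (ind_left s n a) \<and>
                             (T0 s ^^ j) (ind_left s n a) \<in> ind_sub s m b}"

definition matvec :: "('a::finite \<Rightarrow> 'a \<Rightarrow> nat) \<Rightarrow> ('a \<Rightarrow> real) \<Rightarrow> 'a \<Rightarrow> real" where
  "matvec M v a = (\<Sum>b\<in>UNIV. real (M a b) * v b)"

definition vnorm :: "('a::finite \<Rightarrow> real) \<Rightarrow> real" where
  "vnorm v = (\<Sum>a\<in>UNIV. \<bar>v a\<bar>)"

definition lin_subspace :: "('a \<Rightarrow> real) set \<Rightarrow> bool" where
  "lin_subspace S \<longleftrightarrow> (\<lambda>_. 0) \<in> S \<and> (\<forall>u\<in>S. \<forall>v\<in>S. (\<lambda>a. u a + v a) \<in> S) \<and>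
                      (\<forall>c. \<forall>u\<in>S. (\<lambda>a. c * u a) \<in> S)"

definition oseledets_generic :: "('a::finite) iet_data \<Rightarrow> bool" where
  "oseledets_generic s \<longleftrightarrow> (\<exists>(F :: nat \<Rightarrow> ('a \<Rightarrow> real) set) (\<theta> :: nat \<Rightarrow> real) r.
      r \<ge> 1 \<and> F 0 = UNIV \<and> F r = {\<lambda>_. 0} \<and>
      (\<forall>i<r. lin_subspace (F i) \<and> F (Suc i) \<subset> F i) \<and>
      (\<forall>i j. i < j \<longrightarrow> j < r \<longrightarrow> \<theta> j < \<theta> i) \<and>
      (\<forall>i<r. \<forall>v \<in> F i - F (Suc i). \<forall>\<epsilon>>0. \<forall>\<^sub>F k in sequentially.
          exp ((\<theta> i - \<epsilon>) * real k) \<le> vnorm (matvec (Zmat s 0 k) v) \<and>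
          vnorm (matvec (Zmat s 0 k) v) \<le> exp ((\<theta> i + \<epsilon>) * real k)))"

text \<open>E_cs(T_0): vectors with nonpositive Lyapunov exponent for the Zorich cocycle.\<close>
definition E_cs :: "('a::finite) iet_data \<Rightarrow> ('a \<Rightarrow> real) set" where
  "E_cs s = {v. \<forall>\<epsilon>>0. \<forall>\<^sub>F k in sequentially.
                 vnorm (matvec (Zmat s 0 k) v) \<le> exp (\<epsilon> * real k)}"

definition BC_condition :: "('a::finite) iet_data \<Rightarrow> bool" where
  "BC_condition s \<longleftrightarrow> (case s of (pt, pb, lam) \<Rightarrow>
     valid_iet pt pb lam \<and> keane pt pb lam \<and> oseledets_generic s \<and> inf_complete s \<and>
     (\<exists>nk :: nat \<Rightarrow> nat. strict_mono nk \<and>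
        (\<exists>N::nat. \<exists>K::nat. K > 0 \<and> (\<forall>k a b. 1 \<le> Zmat s (nk k) (nk k + N) a b \<and>
                                              Zmat s (nk k) (nk k + N) a b \<le> K)) \<and>
        (\<exists>V>0. \<forall>k. \<forall>v\<in>E_cs s. vnorm (matvec (Zmat s 0 (nk k)) v) \<le> V * vnorm v)))"

end

theory Submission
  imports Defs
begin

lemma bij_pos_lt: "bij_betw p UNIV {..<CARD('a::finite)} \<Longrightarrow> p (a::'a) < CARD('a)"
  using bij_betwE by blast

lemma bij_inj: "bij_betw p UNIV B \<Longrightarrow> p a = p b \<Longrightarrow> a = b"
  unfolding bij_betw_def inj_on_def by blast

lemma bij_surj: "bij_betw p UNIV {..<CARD('a::finite)} \<Longrightarrow> k < CARD('a) \<Longrightarrow> \<exists>a::'a. p a = k"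
  unfolding bij_betw_def by (metis UNIV_I imageE lessThan_iff)

lemma lpos_nonneg: "(\<forall>a. lam a \<ge> 0) \<Longrightarrow> lpos p lam a \<ge> 0"
  unfolding lpos_def by (simp add: sum_nonneg)

lemma lpos_lt:
  assumes "\<forall>a. (lam::'a::finite\<Rightarrow>real) a \<ge> 0" "p a < p b"
  shows "lpos p lam a + lam a \<le> lpos p lam b"
proof -
  have "lpos p lam a + lam a = sum lam ({c. p c < p a} \<union> {a})"
    unfolding lpos_def by (subst sum.union_disjoint) auto
  also have "\<dots> \<le> sum lam {c. p c < p b}"
    by (rule sum_mono2) (use assms in auto)
  finally show ?thesis unfolding lpos_def .
qed

lemma lpos_le_total:
  assumes "\<forall>a. (lam::'a::finite\<Rightarrow>real) a \<ge> 0"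
  shows "lpos p lam a + lam a \<le> sum lam UNIV"
proof -
  have "lpos p lam a + lam a = sum lam ({c. p c < p a} \<union> {a})"
    unfolding lpos_def by (subst sum.union_disjoint) auto
  also have "\<dots> \<le> sum lam UNIV"
    by (rule sum_mono2) (use assms in auto)
  finally show ?thesis .
qed

lemma lpos_insert:
  assumes "inj p"
  shows "lpos p lam a + lam a = sum lam {c. p c \<le> p a}"
proof -
  have "{c. p c \<le> p a} = {c. p c < p a} \<union> {a}"
    using assms by (auto simp: inj_def le_less)
  thus ?thesis unfolding lpos_def by (simp add: sum.union_disjoint)
qed

lemma lpos_succ:
  assumes "inj p" "p b = Suc (p a)"
  shows "lpos p lam b = lpos p lam a + lam a"
proof -
  have "{c. p c < p b} = {c. p c \<le> p a}" using assms(2) by auto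
  thus ?thesis using lpos_insert[OF assms(1)] unfolding lpos_def by simp
qed

lemma lpos_last:
  assumes "bij_betw p UNIV {..<CARD('a::finite)}" "p (a::'a) = CARD('a) - 1"
  shows "lpos p lam a + lam a = sum lam UNIV"
proof -
  have "inj p" using assms(1) bij_betw_def by blast
  moreover have "{c. p c \<le> p a} = UNIV"
  proof (rule set_eqI)
    fix c
    have "p c < CARD('a)" using bij_pos_lt[OF assms(1)] .
    thus "c \<in> {c. p c \<le> p a} \<longleftrightarrow> c \<in> UNIV" using assms(2) by simp
  qed
  ultimately show ?thesis using lpos_insert by metis
qed

lemma subint_disj:
  assumes "inj p" "\<forall>a. lam a \<ge> 0" "a \<noteq> b"
  shows "subint p lam a \<inter> subint p lam b = {}"
proof -
  have "p a \<noteq> p b" using assms by (auto simp: inj_def)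
  hence "p a < p b \<or> p b < p a" by auto
  thus ?thesis using lpos_lt[OF assms(2), of p a b] lpos_lt[OF assms(2), of p b a]
    unfolding subint_def by auto
qed

lemma subint_sub:
  assumes "\<forall>a. lam a \<ge> 0"
  shows "subint p lam a \<subseteq> {0..<sum lam UNIV}"
proof
  fix x assume "x \<in> subint p lam a"
  thus "x \<in> {0..<sum lam UNIV}"
    using lpos_nonneg[OF assms, of p a] lpos_le_total[OF assms, of p a] unfolding subint_def by auto
qed

lemma subint_cover:
  assumes "bij_betw p UNIV {..<CARD('a::finite)}" "\<forall>a. lam a \<ge> 0"
    and "0 \<le> x" "x < sum lam UNIV"
  shows "\<exists>a::'a. x \<in> subint p lam a"
proof -
  have inj: "inj p" using assms(1) bij_betw_def by blast
  obtain a0 where a0: "p a0 = 0" using bij_surj[OF assms(1), of 0] by fastforce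
  have l0: "lpos p lam a0 = 0" unfolding lpos_def using a0 by simp
  let ?P = "{a. lpos p lam a \<le> x}"
  have "a0 \<in> ?P" using l0 assms(3) by auto
  hence ne: "?P \<noteq> {}" by blast
  have fin: "finite (p ` ?P)" by simp
  define m where "m = Max (p ` ?P)"
  have "m \<in> p ` ?P" unfolding m_def using ne by (intro Max_in) auto
  then obtain a where a: "a \<in> ?P" "p a = m" by auto
  have amax: "\<And>b. b \<in> ?P \<Longrightarrow> p b \<le> p a" using a(2) unfolding m_def by simp
  show ?thesis
  proof (rule ccontr)
    assume nx: "\<not> ?thesis"
    hence ge: "x \<ge> lpos p lam a + lam a" using a(1) unfolding subint_def by auto
    show False
    proof (cases "p a = CARD('a) - 1")
      case True
      thus False using lpos_last[OF assms(1) True] ge assms(4) by simp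
    next
      case False
      hence "Suc (p a) < CARD('a)" using bij_pos_lt[OF assms(1), of a] by auto
      then obtain b where b: "p b = Suc (p a)" using bij_surj[OF assms(1)] by blast
      have "lpos p lam b \<le> x" using lpos_succ[OF inj b] ge by simp
      thus False using amax[of b] b by simp
    qed
  qed
qed

lemma sum_if_single:
  fixes g :: "'a::finite \<Rightarrow> real"
  assumes "\<And>c. c \<noteq> a \<Longrightarrow> \<not> P c" "P a"
  shows "(\<Sum>c\<in>UNIV. if P c then g c else 0) = g a"
proof -
  have "(\<Sum>c\<in>UNIV. if P c then g c else 0) = (\<Sum>c\<in>UNIV. if c = a then g c else 0)"
    by (rule sum.cong) (use assms in auto)
  thus ?thesis by simp
qed

lemma iet_map_on:
  assumes "inj pt" "\<forall>a. lam a \<ge> 0" "x \<in> subint pt lam a"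
  shows "iet_map pt pb lam x = x + lpos pb lam a - lpos pt lam a"
proof -
  have "\<And>c. c \<noteq> a \<Longrightarrow> x \<notin> subint pt lam c" using subint_disj[OF assms(1,2)] assms(3) by blast
  thus ?thesis unfolding iet_map_def using sum_if_single[of a "\<lambda>c. x \<in> subint pt lam c"] assms(3)
    by simp
qed

lemma iet_map_subint:
  assumes "inj pt" "\<forall>a. lam a \<ge> 0" "x \<in> subint pt lam a"
  shows "iet_map pt pb lam x \<in> subint pb lam a"
  using iet_map_on[OF assms] assms(3) unfolding subint_def by auto

lemma iet_map_onto:
  assumes "inj pt" "\<forall>a. lam a \<ge> 0" "y \<in> subint pb lam a"
  shows "\<exists>x \<in> subint pt lam a. iet_map pt pb lam x = y"
proof -
  let ?x = "y - lpos pb lam a + lpos pt lam a"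
  have "?x \<in> subint pt lam a" using assms(3) unfolding subint_def by auto
  moreover have "iet_map pt pb lam ?x = y" using iet_map_on[OF assms(1,2) calculation] by simp
  ultimately show ?thesis by blast
qed

lemma f_iet_on:
  assumes "inj pt" "\<forall>a. lam a \<ge> 0" "x \<in> subint pt lam a"
  shows "f_iet pt lam \<omega> x = \<omega> a"
proof -
  have "\<And>c. c \<noteq> a \<Longrightarrow> x \<notin> subint pt lam c" using subint_disj[OF assms(1,2)] assms(3) by blast
  thus ?thesis unfolding f_iet_def using sum_if_single[of a "\<lambda>c. x \<in> subint pt lam c"] assms(3)
    by simp
qed

lemma last_sym_prop:
  fixes p :: "'a::finite \<Rightarrow> nat"
  assumes "bij_betw p UNIV {..<CARD('a::finite)}"
  shows "p (last_sym p) = CARD('a) - 1"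
proof -
  have "CARD('a) - 1 < CARD('a)" using finite_UNIV_card_ge_0 by fastforce
  then obtain a::'a where a: "p a = CARD('a) - 1" using bij_surj[OF assms] by blast
  have "\<And>b. p b = CARD('a) - 1 \<Longrightarrow> b = a" using bij_inj[OF assms] a by metis
  hence "last_sym p = a" unfolding last_sym_def using a by (intro the_equality) blast+
  thus ?thesis using a by simp
qed

lemma bij_of_inj_lt:
  fixes f :: "'a::finite \<Rightarrow> nat"
  assumes "inj f" "\<And>a. f a < CARD('a)"
  shows "bij_betw f UNIV {..<CARD('a)}"
proof -
  have sub: "f ` UNIV \<subseteq> {..<CARD('a)}" using assms(2) by auto
  have "card (f ` UNIV) = CARD('a)" using assms(1) by (simp add: card_image)
  hence "f ` UNIV = {..<CARD('a)}" using sub by (intro card_subset_eq) auto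
  thus ?thesis using assms(1) by (simp add: bij_betw_def)
qed

locale ins =
  fixes p :: "'a::finite \<Rightarrow> nat" and x y :: 'a and lam :: "'a \<Rightarrow> real"
  assumes bij: "bij_betw p UNIV {..<CARD('a)}"
    and px: "p x = CARD('a) - 1" and yx: "y \<noteq> x"
begin

definition p' where "p' = (\<lambda>b. if b = x then p y + 1 else if p b > p y then p b + 1 else p b)"
definition lam' where "lam' = lam(y := lam y - lam x)"

lemma injp: "inj p" using bij bij_betw_def by blast
lemma plt: "p a < CARD('a)" using bij_pos_lt[OF bij] .
lemma pyx: "p y < CARD('a) - 1"
proof -
  have "p y \<noteq> p x" using yx injp by (auto simp: inj_def)
  thus ?thesis using px plt[of y] by simp
qed
lemma pa_lt: "a \<noteq> x \<Longrightarrow> p a < CARD('a) - 1"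
proof -
  assume "a \<noteq> x"
  hence "p a \<noteq> p x" using injp by (auto simp: inj_def)
  thus ?thesis using px plt[of a] by simp
qed

lemma bij': "bij_betw p' UNIV {..<CARD('a)}"
proof (rule bij_of_inj_lt)
  show "inj p'"
  proof (rule injI)
    fix a b assume "p' a = p' b"
    thus "a = b" unfolding p'_def using injp
      by (auto split: if_splits simp: inj_def)
  qed
  fix a show "p' a < CARD('a)" unfolding p'_def using pyx pa_lt[of a] by auto
qed

lemma lpos_x: "lpos p' lam' x = lpos p lam y + lam' y"
proof -
  have "{c. p' c < p' x} = {c. p c \<le> p y}"
    using px pyx unfolding p'_def by (auto split: if_splits)
  hence "lpos p' lam' x = sum lam' {c. p c \<le> p y}" unfolding lpos_def by simp
  also have "\<dots> = lpos p lam' y + lam' y" using lpos_insert[OF injp] by simp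
  also have "lpos p lam' y = lpos p lam y" unfolding lpos_def lam'_def by (rule sum.cong) auto
  finally show ?thesis .
qed

lemma lpos_other:
  assumes "a \<noteq> x"
  shows "lpos p' lam' a = lpos p lam a"
proof (cases "p a \<le> p y")
  case True
  hence "{c. p' c < p' a} = {c. p c < p a}"
    using assms px pyx unfolding p'_def by (auto split: if_splits)
  hence "lpos p' lam' a = sum lam' {c. p c < p a}" unfolding lpos_def by simp
  also have "\<dots> = lpos p lam a" unfolding lpos_def lam'_def using True by (intro sum.cong) auto
  finally show ?thesis .
next
  case False
  have xn: "x \<notin> {c. p c < p a}" using px pa_lt[OF assms] by auto
  have "{c. p' c < p' a} = insert x {c. p c < p a}"
    using assms px pyx False unfolding p'_def by (auto split: if_splits)
  hence "lpos p' lam' a = lam' x + sum lam' {c. p c < p a}" unfolding lpos_def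
    using xn by simp
  also have "sum lam' {c. p c < p a} = sum lam {c. p c < p a} - lam x"
  proof -
    have yin: "y \<in> {c. p c < p a}" using False by simp
    have "sum lam' {c. p c < p a} = lam' y + sum lam' ({c. p c < p a} - {y})"
      using yin by (simp add: sum.remove)
    also have "sum lam' ({c. p c < p a} - {y}) = sum lam ({c. p c < p a} - {y})"
      unfolding lam'_def by (rule sum.cong) auto
    also have "lam' y + sum lam ({c. p c < p a} - {y}) = sum lam {c. p c < p a} - lam x"
      using yin by (simp add: lam'_def sum.remove)
    finally show ?thesis .
  qed
  finally show ?thesis unfolding lpos_def lam'_def using yx by simp
qed

lemma pos_nz: "a \<noteq> x \<Longrightarrow> (p' a = 0) = (p a = 0)"
  unfolding p'_def by auto

lemma px'_nz: "p' x \<noteq> 0" unfolding p'_def by simp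

end

definition vg :: "('a::finite \<Rightarrow> nat) \<Rightarrow> ('a \<Rightarrow> nat) \<Rightarrow> ('a \<Rightarrow> real) \<Rightarrow> bool" where
  "vg pt pb lam \<longleftrightarrow> CARD('a) \<ge> 2 \<and> bij_betw pt UNIV {..<CARD('a)} \<and>
     bij_betw pb UNIV {..<CARD('a)} \<and> (\<forall>a. lam a > 0)"

lemma other_row:
  assumes "bij_betw q UNIV {..<CARD('a::finite)}" "q (y::'a) = CARD('a) - 1"
  shows "lpos q (lam(y := v)) a = lpos q lam a"
proof -
  have "y \<notin> {c. q c < q a}" using assms bij_pos_lt[OF assms(1), of a] by auto
  thus ?thesis unfolding lpos_def by (intro sum.cong) auto
qed

lemma keane_iter:
  assumes "keane pt pb lam" "pt a \<noteq> 0" "pt b \<noteq> 0" "m \<ge> 1"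
  shows "(iet_map pt pb lam ^^ m) (lpos pt lam a) \<noteq> lpos pt lam b"
  using assms unfolding keane_def by blast

locale stp =
  fixes pt pb :: "'a::finite \<Rightarrow> nat" and lam :: "'a \<Rightarrow> real"
  assumes vg: "vg pt pb lam" and kn: "keane pt pb lam"
begin

abbreviation "L \<equiv> sum lam UNIV"
abbreviation "F \<equiv> iet_map pt pb lam"
definition "wt = last_sym pt"
definition "wb = last_sym pb"

lemma bpt: "bij_betw pt UNIV {..<CARD('a)}" using vg vg_def by blast
lemma bpb: "bij_betw pb UNIV {..<CARD('a)}" using vg vg_def by blast
lemma d2: "CARD('a) \<ge> 2" using vg vg_def by blast
lemma lpos': "\<forall>a. lam a > 0" using vg vg_def by blast
lemma lnn: "\<forall>a. lam a \<ge> 0" using lpos' less_imp_le by blast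
lemma ipt: "inj pt" using bpt bij_betw_def by blast
lemma ipb: "inj pb" using bpb bij_betw_def by blast
lemma ptwt: "pt wt = CARD('a) - 1" unfolding wt_def using last_sym_prop[OF bpt] .
lemma pbwb: "pb wb = CARD('a) - 1" unfolding wb_def using last_sym_prop[OF bpb] .
lemma ptwt_nz: "pt wt \<noteq> 0" using ptwt d2 by simp
lemma pbwb_nz: "pb wb \<noteq> 0" using pbwb d2 by simp

lemma lpos_wt: "lpos pt lam wt = L - lam wt" using lpos_last[OF bpt ptwt, of lam] by linarith
lemma lpos_wb: "lpos pb lam wb = L - lam wb" using lpos_last[OF bpb pbwb, of lam] by linarith

lemma F_on: "z \<in> subint pt lam a \<Longrightarrow> F z = z + lpos pb lam a - lpos pt lam a"
  using iet_map_on[OF ipt lnn] .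

lemma F_sub: "z \<in> subint pt lam a \<Longrightarrow> F z \<in> subint pb lam a"
  using iet_map_subint[OF ipt lnn] .

lemma F_range: "z \<in> {0..<L} \<Longrightarrow> F z \<in> {0..<L}"
proof -
  assume "z \<in> {0..<L}"
  then obtain a where "z \<in> subint pt lam a" using subint_cover[OF bpt lnn] by auto
  thus ?thesis using F_sub subint_sub[OF lnn] by blast
qed

lemma Fpow_range: "z \<in> {0..<L} \<Longrightarrow> (F ^^ n) z \<in> {0..<L}"
proof (induction n)
  case (Suc n)
  thus ?case using F_range by simp
qed simp

lemma lpos_start: "pt a = 0 \<Longrightarrow> lpos pt lam a = 0"
  unfolding lpos_def by simp

lemma lpos_start_b: "pb a = 0 \<Longrightarrow> lpos pb lam a = 0"
  unfolding lpos_def by simp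

lemma ep_in: "lpos pt lam a \<in> subint pt lam a"
  unfolding subint_def using lpos' by auto

lemma wt_ne_wb: "wt \<noteq> wb"
proof
  assume eq: "wt = wb"
  have "F (lpos pt lam wt) = lpos pb lam wt" using F_on[OF ep_in] by simp
  also have "\<dots> = lpos pt lam wt" using lpos_wt lpos_wb eq by simp
  finally have "(F ^^ 1) (lpos pt lam wt) = lpos pt lam wt" by simp
  thus False using keane_iter[OF kn ptwt_nz ptwt_nz, of 1] by auto
qed

lemma lam_ne: "lam wt \<noteq> lam wb"
proof
  assume eq: "lam wt = lam wb"
  have im: "F (lpos pt lam wb) = lpos pt lam wt"
    using F_on[OF ep_in, of wb] lpos_wt lpos_wb eq by simp
  show False
  proof (cases "pt wb = 0")
    case False
    thus False using keane_iter[OF kn False ptwt_nz, of 1] im by simp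
  next
    case True
    obtain c where c: "pb c = 0" using bij_surj[OF bpb, of 0] d2 by auto
    have cnz: "pt c \<noteq> 0"
    proof
      assume "pt c = 0"
      hence "c = wb" using True ipt by (auto simp: inj_def)
      thus False using c pbwb_nz by simp
    qed
    have "F (lpos pt lam c) = 0" using F_on[OF ep_in, of c] lpos_start_b[OF c] by simp
    hence "(F ^^ 2) (lpos pt lam c) = lpos pt lam wt"
      using im lpos_start[OF True] by (simp add: numeral_2_eq_2)
    thus False using keane_iter[OF kn cnz ptwt_nz, of 2] by simp
  qed
qed

end

lemma sum_upd: "sum (f(y := v)) (UNIV::'a::finite set) = sum f UNIV - f y + (v::real)"
proof -
  have 1: "sum (f(y := v)) UNIV = (f(y:=v)) y + sum (f(y := v)) (UNIV - {y})"
    by (rule sum.remove) simp_all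
  have 2: "sum (f(y := v)) (UNIV - {y}) = sum f (UNIV - {y})" by (rule sum.cong) auto
  have 3: "sum f UNIV = f y + sum f (UNIV - {y})" by (rule sum.remove) simp_all
  show ?thesis using 1 2 3 by simp
qed

lemma iet_range:
  assumes "bij_betw pt UNIV {..<CARD('a::finite)}" "\<forall>a. (lam::'a \<Rightarrow> real) a \<ge> 0"
    "z \<in> {0..<sum lam UNIV}"
  shows "iet_map pt pb lam z \<in> {0..<sum lam UNIV}"
proof -
  have inj: "inj pt" using assms(1) bij_betw_def by blast
  obtain a where "z \<in> subint pt lam a" using subint_cover[OF assms(1,2)] assms(3) by auto
  thus ?thesis using iet_map_subint[OF inj assms(2)] subint_sub[OF assms(2)] by blast
qed

lemma iter_lift:
  assumes "\<And>z. z \<in> A \<Longrightarrow> G z \<in> A \<and> (G z = F z \<or> G z = F (F z))" "z \<in> A"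
  shows "\<exists>M\<ge>m. (G ^^ m) z = (F ^^ M) z"
  using assms(2)
proof (induction m arbitrary: z)
  case 0 thus ?case by (intro exI[of _ 0]) simp
next
  case (Suc m)
  have GA: "G z \<in> A" using assms(1) Suc.prems by blast
  obtain M where M: "M \<ge> m" "(G ^^ m) (G z) = (F ^^ M) (G z)" using Suc.IH[OF GA] by blast
  have eq: "(G ^^ Suc m) z = (G ^^ m) (G z)" by (simp add: funpow_Suc_right del: funpow.simps)
  show ?case
  proof (cases "G z = F z")
    case True
    hence "(G ^^ Suc m) z = (F ^^ Suc M) z" using eq M by (simp add: funpow_Suc_right del: funpow.simps)
    thus ?thesis using M by (intro exI[of _ "Suc M"]) simp
  next
    case False
    hence "G z = F (F z)" using assms(1) Suc.prems by blast
    hence "(G ^^ Suc m) z = (F ^^ Suc (Suc M)) z" using eq M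
      by (simp add: funpow_Suc_right del: funpow.simps)
    thus ?thesis using M by (intro exI[of _ "Suc (Suc M)"]) simp
  qed
qed

definition stepok where
  "stepok pt pb lam pt' pb' (lam' :: 'a::finite \<Rightarrow> real) \<longleftrightarrow>
     vg pt' pb' lam' \<and> keane pt' pb' lam' \<and> sum lam' UNIV \<le> sum lam UNIV \<and>
     (\<forall>a. \<exists>b. subint pt' lam' a \<subseteq> subint pt lam b) \<and>
     (\<forall>a. (\<forall>z\<in>subint pt' lam' a. iet_map pt pb lam z \<in> {0..<sum lam' UNIV} \<and>
              iet_map pt' pb' lam' z = iet_map pt pb lam z) \<or>
          (\<exists>w. \<forall>z\<in>subint pt' lam' a. iet_map pt pb lam z \<in> subint pt lam w \<and>
              iet_map pt pb lam z \<notin> {0..<sum lam' UNIV} \<and>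
              iet_map pt' pb' lam' z = iet_map pt pb lam (iet_map pt pb lam z))) \<and>
     (\<forall>u\<in>{sum lam' UNIV..<sum lam UNIV}. \<exists>z\<in>{0..<sum lam' UNIV}. iet_map pt pb lam z = u)"

context stp begin

lemma pt_wb_lt: "pt wb < pt wt"
proof -
  have "pt wb \<noteq> pt wt" using wt_ne_wb ipt by (auto simp: inj_def)
  thus ?thesis using ptwt bij_pos_lt[OF bpt, of wb] by simp
qed

lemma pb_wt_lt: "pb wt < pb wb"
proof -
  have "pb wb \<noteq> pb wt" using wt_ne_wb ipb by (auto simp: inj_def)
  thus ?thesis using pbwb bij_pos_lt[OF bpb, of wt] by simp
qed

lemma lpos_wb_le: "lpos pt lam wb + lam wb \<le> L - lam wt"
  using lpos_lt[OF lnn pt_wb_lt] lpos_wt by simp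

lemma lpos_wt_le: "lpos pb lam wt + lam wt \<le> L - lam wb"
  using lpos_lt[OF lnn pb_wt_lt] lpos_wb by simp

lemma subint_wb_b: "subint pb lam wb = {L - lam wb..<L}"
  unfolding subint_def using lpos_wb by simp

lemma subint_wt_t: "subint pt lam wt = {L - lam wt..<L}"
  unfolding subint_def using lpos_wt by simp

lemma Fz_range: "z \<in> subint pt lam a \<Longrightarrow> F z \<in> {0..<L}"
  using F_sub subint_sub[OF lnn] by blast

lemma step_top:
  assumes gt: "lam wt > lam wb"
  defines "pb' \<equiv> (\<lambda>b. if b = wb then pb wt + 1 else if pb b > pb wt then pb b + 1 else pb b)"
    and "lam' \<equiv> lam(wt := lam wt - lam wb)"
  shows "stepok pt pb lam pt pb' lam'"
proof -
  interpret I: ins pb wb wt lam using bpb pbwb wt_ne_wb by unfold_locales auto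
  have pb'eq: "I.p' = pb'" unfolding I.p'_def pb'_def ..
  have lam'eq: "I.lam' = lam'" unfolding I.lam'_def lam'_def ..
  have lam'pos: "\<forall>a. lam' a > 0" using lpos' gt unfolding lam'_def by auto
  have lam'nn: "\<forall>a. lam' a \<ge> 0" using lam'pos less_imp_le by blast
  have L': "sum lam' UNIV = L - lam wb" unfolding lam'_def sum_upd by simp
  have lp: "\<And>a. lpos pt lam' a = lpos pt lam a" unfolding lam'_def using other_row[OF bpt ptwt] .
  have lpb: "\<And>a. a \<noteq> wb \<Longrightarrow> lpos pb' lam' a = lpos pb lam a"
    using I.lpos_other pb'eq lam'eq by simp
  have lpbx: "lpos pb' lam' wb = lpos pb lam wt + lam' wt" using I.lpos_x pb'eq lam'eq by simp
  have vg': "vg pt pb' lam'" unfolding vg_def using d2 bpt I.bij' pb'eq lam'pos by simp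
  have sub: "\<And>a. subint pt lam' a \<subseteq> subint pt lam a"
    unfolding subint_def lp using lnn gt unfolding lam'_def by auto
  let ?F' = "iet_map pt pb' lam'"
  have F'_on: "\<And>z a. z \<in> subint pt lam' a \<Longrightarrow> ?F' z = z + lpos pb' lam' a - lpos pt lam a"
    using iet_map_on[OF ipt lam'nn] lp by simp
  have R4: "\<And>a. (\<forall>z\<in>subint pt lam' a. F z \<in> {0..<sum lam' UNIV} \<and> ?F' z = F z) \<or>
          (\<exists>w. \<forall>z\<in>subint pt lam' a. F z \<in> subint pt lam w \<and> F z \<notin> {0..<sum lam' UNIV} \<and>
              ?F' z = F (F z))"
  proof -
    fix a
    show "?thesis a"
    proof (cases "a = wb")
      case False
      { fix z assume z: "z \<in> subint pt lam' a"
        hence z0: "z \<in> subint pt lam a" using sub by blast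
        have "?F' z = F z" using F'_on[OF z] lpb[OF False] F_on[OF z0] by simp
        moreover have "F z \<in> subint pb lam a" using F_sub[OF z0] .
        hence "F z \<notin> subint pb lam wb" using subint_disj[OF ipb lnn False] by blast
        hence "F z \<in> {0..<sum lam' UNIV}" using Fz_range[OF z0] subint_wb_b L' by auto
        ultimately have "F z \<in> {0..<sum lam' UNIV} \<and> ?F' z = F z" by simp }
      thus ?thesis by blast
    next
      case True
      { fix z assume z: "z \<in> subint pt lam' a"
        hence z0: "z \<in> subint pt lam wb" using sub True by blast
        have Fz: "F z = z + (L - lam wb) - lpos pt lam wb" using F_on[OF z0] lpos_wb by simp
        have Fzb: "F z \<in> subint pb lam wb" using F_sub[OF z0] .
        hence Fzt: "F z \<in> subint pt lam wt" using subint_wb_b subint_wt_t gt by auto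
        have "F (F z) = F z + lpos pb lam wt - (L - lam wt)" using F_on[OF Fzt] lpos_wt by simp
        moreover have "?F' z = z + lpos pb lam wt + lam' wt - lpos pt lam wb"
          using F'_on[OF z] True lpbx by simp
        ultimately have "?F' z = F (F z)" using Fz unfolding lam'_def by simp
        moreover have "F z \<notin> {0..<sum lam' UNIV}" using Fzb subint_wb_b L' by auto
        ultimately have "F z \<in> subint pt lam wt \<and> F z \<notin> {0..<sum lam' UNIV} \<and> ?F' z = F (F z)"
          using Fzt by simp }
      thus ?thesis by blast
    qed
  qed
  have sub0: "\<And>a. subint pt lam' a \<subseteq> {0..<sum lam' UNIV}" using subint_sub[OF lam'nn] .
  have iter: "\<And>z. z \<in> {0..<sum lam' UNIV} \<Longrightarrow> ?F' z \<in> {0..<sum lam' UNIV} \<and> (?F' z = F z \<or> ?F' z = F (F z))"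
  proof -
    fix z assume z: "z \<in> {0..<sum lam' UNIV}"
    then obtain a where za: "z \<in> subint pt lam' a" using subint_cover[OF bpt lam'nn] by auto
    show "?F' z \<in> {0..<sum lam' UNIV} \<and> (?F' z = F z \<or> ?F' z = F (F z))"
      using iet_range[OF bpt lam'nn z] R4[of a] za by blast
  qed
  have kn': "keane pt pb' lam'"
    unfolding keane_def
  proof (intro allI impI)
    fix a b m assume a: "pt a \<noteq> 0" and b: "pt b \<noteq> 0" and m: "(m::nat) \<ge> 1"
    have e: "lpos pt lam' a \<in> {0..<sum lam' UNIV}" using sub0 ep_in[of a] lp
      unfolding subint_def using lam'pos by fastforce
    obtain M where M: "M \<ge> m" "(?F' ^^ m) (lpos pt lam' a) = (F ^^ M) (lpos pt lam' a)"
      using iter_lift[of "{0..<sum lam' UNIV}" ?F' F, OF iter e] by blast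
    show "(?F' ^^ m) (lpos pt lam' a) \<noteq> lpos pt lam' b"
      using keane_iter[OF kn a b, of M] M m lp by simp
  qed
  have R5: "\<forall>u\<in>{sum lam' UNIV..<L}. \<exists>z\<in>{0..<sum lam' UNIV}. F z = u"
  proof
    fix u assume u: "u \<in> {sum lam' UNIV..<L}"
    hence "u \<in> subint pb lam wb" using subint_wb_b L' by simp
    then obtain z where z: "z \<in> subint pt lam wb" "F z = u" using iet_map_onto[OF ipt lnn] by blast
    have "z \<in> {0..<sum lam' UNIV}" using z(1) lpos_wb_le lpos_nonneg[OF lnn, of pt wb] L' gt
      unfolding subint_def by auto
    thus "\<exists>z\<in>{0..<sum lam' UNIV}. F z = u" using z(2) by blast
  qed
  show ?thesis unfolding stepok_def
    using vg' kn' L' sub R4 R5 lnn by (auto intro: exI)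
qed

end

context stp begin

lemma step_bot:
  assumes lt: "lam wt < lam wb"
  defines "pt' \<equiv> (\<lambda>b. if b = wt then pt wb + 1 else if pt b > pt wb then pt b + 1 else pt b)"
    and "lam' \<equiv> lam(wb := lam wb - lam wt)"
  shows "stepok pt pb lam pt' pb lam'"
proof -
  interpret I: ins pt wt wb lam using bpt ptwt wt_ne_wb by unfold_locales auto
  have pt'eq: "I.p' = pt'" unfolding I.p'_def pt'_def ..
  have lam'eq: "I.lam' = lam'" unfolding I.lam'_def lam'_def ..
  have lam'pos: "\<forall>a. lam' a > 0" using lpos' lt unfolding lam'_def by auto
  have lam'nn: "\<forall>a. lam' a \<ge> 0" using lam'pos less_imp_le by blast
  have L': "sum lam' UNIV = L - lam wt" unfolding lam'_def sum_upd by simp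
  have lpb: "\<And>a. lpos pb lam' a = lpos pb lam a" unfolding lam'_def using other_row[OF bpb pbwb] .
  have lpt: "\<And>a. a \<noteq> wt \<Longrightarrow> lpos pt' lam' a = lpos pt lam a"
    using I.lpos_other pt'eq lam'eq by simp
  have lptx: "lpos pt' lam' wt = lpos pt lam wb + lam' wb" using I.lpos_x pt'eq lam'eq by simp
  have bpt': "bij_betw pt' UNIV {..<CARD('a)}" using I.bij' pt'eq by simp
  have ipt': "inj pt'" using bpt' bij_betw_def by blast
  have vg': "vg pt' pb lam'" unfolding vg_def using d2 bpt' bpb lam'pos by simp
  have subo: "\<And>a. a \<noteq> wt \<Longrightarrow> subint pt' lam' a \<subseteq> subint pt lam a"
    unfolding subint_def using lpt lnn lt unfolding lam'_def by auto
  have subx: "subint pt' lam' wt = {lpos pt lam wb + lam wb - lam wt..<lpos pt lam wb + lam wb}"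
    unfolding subint_def lptx unfolding lam'_def using wt_ne_wb by (simp add: algebra_simps)
  have subx0: "subint pt' lam' wt \<subseteq> subint pt lam wb"
    unfolding subx unfolding subint_def using lpos' lt by auto
  have sub: "\<And>a. \<exists>b. subint pt' lam' a \<subseteq> subint pt lam b"
    using subo subx0 by (metis)
  let ?F' = "iet_map pt' pb lam'"
  have F'_on: "\<And>z a. z \<in> subint pt' lam' a \<Longrightarrow> ?F' z = z + lpos pb lam a - lpos pt' lam' a"
    using iet_map_on[OF ipt' lam'nn] lpb by simp
  have Fwb: "\<And>z. z \<in> subint pt lam wb \<Longrightarrow> F z = z + (L - lam wb) - lpos pt lam wb"
    using F_on lpos_wb by simp
  have R4: "\<And>a. (\<forall>z\<in>subint pt' lam' a. F z \<in> {0..<sum lam' UNIV} \<and> ?F' z = F z) \<or>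
          (\<exists>w. \<forall>z\<in>subint pt' lam' a. F z \<in> subint pt lam w \<and> F z \<notin> {0..<sum lam' UNIV} \<and>
              ?F' z = F (F z))"
  proof -
    fix a
    show "?thesis a"
    proof (cases "a = wt")
      case False
      { fix z assume z: "z \<in> subint pt' lam' a"
        hence z0: "z \<in> subint pt lam a" using subo[OF False] by blast
        have "?F' z = F z" using F'_on[OF z] lpt[OF False] F_on[OF z0] by simp
        moreover have "F z \<in> {0..<sum lam' UNIV}"
        proof (cases "a = wb")
          case False
          have "F z \<in> subint pb lam a" using F_sub[OF z0] .
          hence "F z \<notin> subint pb lam wb" using subint_disj[OF ipb lnn False] by blast
          thus ?thesis using Fz_range[OF z0] subint_wb_b L' lt by auto
        next
          case True
          have "z < lpos pt lam wb + lam wb - lam wt" using z True lpt[OF False]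
            unfolding subint_def lam'_def by simp
          moreover have "F z \<ge> 0" using Fz_range[OF z0] by simp
          ultimately show ?thesis using Fwb[of z] z0 True L' by simp
        qed
        ultimately have "F z \<in> {0..<sum lam' UNIV} \<and> ?F' z = F z" by simp }
      thus ?thesis by blast
    next
      case True
      { fix z assume z: "z \<in> subint pt' lam' a"
        hence z0: "z \<in> subint pt lam wb" using subx0 True by blast
        have Fz: "F z = z + (L - lam wb) - lpos pt lam wb" using Fwb[OF z0] .
        have Fzt: "F z \<in> subint pt lam wt" using Fz z True subx subint_wt_t by auto
        have "F (F z) = F z + lpos pb lam wt - (L - lam wt)" using F_on[OF Fzt] lpos_wt by simp
        moreover have "?F' z = z + lpos pb lam wt - (lpos pt lam wb + lam' wb)"
          using F'_on[OF z] True lptx by simp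
        ultimately have "?F' z = F (F z)" using Fz unfolding lam'_def using wt_ne_wb by simp
        moreover have "F z \<notin> {0..<sum lam' UNIV}" using Fzt subint_wt_t L' by auto
        ultimately have "F z \<in> subint pt lam wt \<and> F z \<notin> {0..<sum lam' UNIV} \<and> ?F' z = F (F z)"
          using Fzt by simp }
      thus ?thesis by blast
    qed
  qed
  have iter: "\<And>z. z \<in> {0..<sum lam' UNIV} \<Longrightarrow> ?F' z \<in> {0..<sum lam' UNIV} \<and> (?F' z = F z \<or> ?F' z = F (F z))"
  proof -
    fix z assume z: "z \<in> {0..<sum lam' UNIV}"
    then obtain a where za: "z \<in> subint pt' lam' a" using subint_cover[OF bpt' lam'nn] by auto
    show "?F' z \<in> {0..<sum lam' UNIV} \<and> (?F' z = F z \<or> ?F' z = F (F z))"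
      using iet_range[OF bpt' lam'nn z] R4[of a] za by blast
  qed
  have sub0: "\<And>a. subint pt' lam' a \<subseteq> {0..<sum lam' UNIV}" using subint_sub[OF lam'nn] .
  have epin: "\<And>a. lpos pt' lam' a \<in> {0..<sum lam' UNIV}"
    using sub0 lam'pos unfolding subint_def by fastforce
  let ?e = "lpos pt' lam' wt"
  have Fe: "F ?e = lpos pt lam wt"
  proof -
    have "?e \<in> subint pt' lam' wt" unfolding subint_def using lam'pos by simp
    hence "?e \<in> subint pt lam wb" using subx0 by blast
    thus ?thesis using Fwb lptx lpos_wt unfolding lam'_def using wt_ne_wb by simp
  qed
  have F'e: "?F' ?e = F (F ?e)"
  proof -
    have "?e \<in> subint pt' lam' wt" unfolding subint_def using lam'pos by simp
    thus ?thesis using R4[of wt] Fe subint_wt_t L' lpos_wt ep_in[of wt] by force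
  qed
  have source: "\<And>a m. pt' a \<noteq> 0 \<Longrightarrow> m \<ge> 1 \<Longrightarrow>
      \<exists>a0 M. pt a0 \<noteq> 0 \<and> M \<ge> 1 \<and> (?F' ^^ m) (lpos pt' lam' a) = (F ^^ M) (lpos pt lam a0)"
  proof -
    fix a and m :: nat assume a: "pt' a \<noteq> 0" and m: "m \<ge> 1"
    show "\<exists>a0 M. pt a0 \<noteq> 0 \<and> M \<ge> 1 \<and> (?F' ^^ m) (lpos pt' lam' a) = (F ^^ M) (lpos pt lam a0)"
    proof (cases "a = wt")
      case False
      obtain M where M: "M \<ge> m" "(?F' ^^ m) (lpos pt' lam' a) = (F ^^ M) (lpos pt' lam' a)"
        using iter_lift[of "{0..<sum lam' UNIV}" ?F' F, OF iter epin] by blast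
      have "pt a \<noteq> 0" using a I.pos_nz[OF False] pt'eq by simp
      thus ?thesis using M m lpt[OF False] by (intro exI[of _ a] exI[of _ M]) simp
    next
      case True
      obtain k where k: "m = Suc k" using m by (cases m) auto
      have F'eA: "?F' ?e \<in> {0..<sum lam' UNIV}" using iter[OF epin[of wt]] by blast
      obtain M where M: "(?F' ^^ k) (?F' ?e) = (F ^^ M) (?F' ?e)"
        using iter_lift[of "{0..<sum lam' UNIV}" ?F' F, OF iter F'eA] by blast
      have "(?F' ^^ m) ?e = (F ^^ Suc M) (lpos pt lam wt)"
        using M k F'e Fe by (simp add: funpow_Suc_right del: funpow.simps)
      thus ?thesis using True ptwt_nz by (intro exI[of _ wt] exI[of _ "Suc M"]) simp
    qed
  qed
  have kn': "keane pt' pb lam'"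
    unfolding keane_def
  proof (intro allI impI)
    fix a b m assume a: "pt' a \<noteq> 0" and b: "pt' b \<noteq> 0" and m: "(m::nat) \<ge> 1"
    obtain a0 M where aM: "pt a0 \<noteq> 0" "M \<ge> 1" "(?F' ^^ m) (lpos pt' lam' a) = (F ^^ M) (lpos pt lam a0)"
      using source[OF a m] by blast
    show "(?F' ^^ m) (lpos pt' lam' a) \<noteq> lpos pt' lam' b"
    proof
      assume eq: "(?F' ^^ m) (lpos pt' lam' a) = lpos pt' lam' b"
      show False
      proof (cases "b = wt")
        case False
        have bnz: "pt b \<noteq> 0" using b I.pos_nz[OF False] pt'eq by simp
        show False using keane_iter[OF kn aM(1) bnz aM(2)] eq aM(3) lpt[OF False] by simp
      next
        case True
        have "(F ^^ Suc M) (lpos pt lam a0) = lpos pt lam wt"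
          using eq aM(3) True Fe by simp
        thus False using keane_iter[OF kn aM(1) ptwt_nz, of "Suc M"] by simp
      qed
    qed
  qed
  have R5: "\<forall>u\<in>{sum lam' UNIV..<L}. \<exists>z\<in>{0..<sum lam' UNIV}. F z = u"
  proof
    fix u assume u: "u \<in> {sum lam' UNIV..<L}"
    let ?z = "u - (L - lam wb) + lpos pt lam wb"
    have z0: "?z \<in> subint pt lam wb" using u L' lt unfolding subint_def by auto
    have "F ?z = u" using Fwb[OF z0] by simp
    moreover have "?z \<in> {0..<sum lam' UNIV}" using z0 lpos_wb_le lpos_nonneg[OF lnn, of pt wb] L' u
      unfolding subint_def by auto
    ultimately show "\<exists>z\<in>{0..<sum lam' UNIV}. F z = u" by blast
  qed
  show ?thesis unfolding stepok_def
    using vg' kn' L' sub R4 R5 lnn lpos' by (auto intro: exI)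
qed

lemma step_ok: "case rv_step (pt, pb, lam) of (pt', pb', lam') \<Rightarrow> stepok pt pb lam pt' pb' lam'"
proof (cases "lam wt > lam wb")
  case True
  thus ?thesis using step_top[OF True] unfolding rv_step_def wt_def wb_def Let_def by simp
next
  case False
  hence "lam wt < lam wb" using lam_ne by simp
  thus ?thesis using step_bot False unfolding rv_step_def wt_def wb_def Let_def by simp
qed

end

definition ret :: "(real \<Rightarrow> real) \<Rightarrow> real set \<Rightarrow> real \<Rightarrow> nat \<Rightarrow> bool" where
  "ret F A x h \<longleftrightarrow> 0 < h \<and> (F ^^ h) x \<in> A \<and> (\<forall>j. 0 < j \<and> j < h \<longrightarrow> (F ^^ j) x \<notin> A)"

definition rt :: "(real \<Rightarrow> real) \<Rightarrow> real set \<Rightarrow> real \<Rightarrow> nat" where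
  "rt F A x = (LEAST j. 0 < j \<and> (F ^^ j) x \<in> A)"

lemma ret_rt: "ret F A x h \<Longrightarrow> rt F A x = h"
  unfolding rt_def
proof (rule Least_equality)
  assume r: "ret F A x h"
  thus "0 < h \<and> (F ^^ h) x \<in> A" unfolding ret_def by blast
  fix y assume y: "0 < y \<and> (F ^^ y) x \<in> A"
  show "h \<le> y"
  proof (rule ccontr)
    assume "\<not> h \<le> y"
    hence "y < h" by simp
    thus False using r y unfolding ret_def by blast
  qed
qed

definition IND :: "(real \<Rightarrow> real) \<Rightarrow> real set \<Rightarrow> (real \<Rightarrow> real) \<Rightarrow> bool" where
  "IND F A G \<longleftrightarrow> (\<forall>x\<in>A. G x \<in> A \<and> ret F A x (rt F A x) \<and> (F ^^ rt F A x) x = G x)"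

primrec rho :: "(real \<Rightarrow> real) \<Rightarrow> real set \<Rightarrow> (real \<Rightarrow> real) \<Rightarrow> real \<Rightarrow> nat \<Rightarrow> nat" where
  "rho F A G x 0 = 0"
| "rho F A G x (Suc i) = rho F A G x i + rt F A ((G ^^ i) x)"

lemma fpa: "(f ^^ (m + n)) x = (f ^^ m) ((f ^^ n) x)"
  by (simp add: funpow_add)

lemma IND_G: "IND F A G \<Longrightarrow> x \<in> A \<Longrightarrow> (G ^^ i) x \<in> A"
  by (induction i) (auto simp: IND_def)

lemma IND_rt_pos: "IND F A G \<Longrightarrow> x \<in> A \<Longrightarrow> rt F A x > 0"
  unfolding IND_def ret_def by blast

lemma IND_Fpow: "IND F A G \<Longrightarrow> x \<in> A \<Longrightarrow> (F ^^ rt F A x) x = G x"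
  unfolding IND_def by blast

lemma IND_gap: "IND F A G \<Longrightarrow> x \<in> A \<Longrightarrow> 0 < j \<Longrightarrow> j < rt F A x \<Longrightarrow> (F ^^ j) x \<notin> A"
  unfolding IND_def ret_def by blast

lemma rho_F:
  assumes "IND F A G" "x \<in> A"
  shows "(F ^^ rho F A G x i) x = (G ^^ i) x"
proof (induction i)
  case (Suc i)
  have "(F ^^ rho F A G x (Suc i)) x = (F ^^ rt F A ((G ^^ i) x)) ((F ^^ rho F A G x i) x)"
    by (simp only: rho.simps add.commute[of "rho F A G x i"] fpa)
  also have "\<dots> = G ((G ^^ i) x)" using Suc IND_Fpow[OF assms(1) IND_G[OF assms]] by simp
  finally show ?case by simp
qed simp

lemma rho_smono:
  assumes "IND F A G" "x \<in> A"
  shows "strict_mono (rho F A G x)"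
  by (rule strict_monoI_Suc) (simp add: IND_rt_pos[OF assms(1) IND_G[OF assms]])

lemma rho_mono_le: "IND F A G \<Longrightarrow> x \<in> A \<Longrightarrow> i \<le> k \<Longrightarrow> rho F A G x i \<le> rho F A G x k"
  using rho_smono strict_mono_less_eq by blast

lemma rho_mono_lt: "IND F A G \<Longrightarrow> x \<in> A \<Longrightarrow> i < k \<Longrightarrow> rho F A G x i < rho F A G x k"
  using rho_smono strict_mono_less by blast

lemma rho_ge: "IND F A G \<Longrightarrow> x \<in> A \<Longrightarrow> rho F A G x i \<ge> i"
  using rho_smono strict_mono_imp_increasing by blast

lemma rho_locate:
  assumes "IND F A G" "x \<in> A"
  shows "\<exists>i. rho F A G x i \<le> j \<and> j < rho F A G x (Suc i)"
proof -
  let ?r = "rho F A G x"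
  have "\<exists>i. j < ?r i" using rho_ge[OF assms, of "Suc j"] by (intro exI[of _ "Suc j"]) simp
  then obtain k where k: "j < ?r k" by blast
  define i where "i = (LEAST i. j < ?r i)"
  have ji: "j < ?r i" unfolding i_def using k by (rule LeastI)
  have i0: "i \<noteq> 0" using ji by (cases i) auto
  then obtain i' where i': "i = Suc i'" by (cases i) auto
  have "i' < i" using i' by simp
  hence "\<not> j < ?r i'" unfolding i_def by (rule not_less_Least)
  thus ?thesis using ji i' by (intro exI[of _ i']) simp
qed

lemma rho_split:
  assumes "IND F A G" "x \<in> A" "rho F A G x i \<le> j"
  shows "(F ^^ j) x = (F ^^ (j - rho F A G x i)) ((G ^^ i) x)"
proof -
  have "(F ^^ j) x = (F ^^ (j - rho F A G x i + rho F A G x i)) x"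
    using assms(3) by simp
  hence "(F ^^ j) x = (F ^^ (j - rho F A G x i)) ((F ^^ rho F A G x i) x)"
    by (simp only: fpa)
  thus ?thesis using rho_F[OF assms(1,2)] by simp
qed

lemma hit_is_rho:
  assumes "IND F A G" "x \<in> A" "(F ^^ j) x \<in> A"
  shows "\<exists>i. j = rho F A G x i"
proof -
  obtain i where i: "rho F A G x i \<le> j" "j < rho F A G x (Suc i)" using rho_locate[OF assms(1,2)] by blast
  show ?thesis
  proof (cases "j = rho F A G x i")
    case False
    let ?y = "(G ^^ i) x"
    have y: "?y \<in> A" using IND_G[OF assms(1,2)] .
    have "(F ^^ (j - rho F A G x i)) ?y \<in> A" using rho_split[OF assms(1,2) i(1)] assms(3) by simp
    moreover have "0 < j - rho F A G x i" "j - rho F A G x i < rt F A ?y" using False i by auto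
    ultimately show ?thesis using IND_gap[OF assms(1) y] by blast
  qed blast
qed

lemma IND_comp:
  assumes "IND F A G" "B \<subseteq> A" "IND G B G2" "x \<in> B"
  shows "ret F B x (rho F A G x (rt G B x)) \<and> rt F B x = rho F A G x (rt G B x)"
proof -
  have xA: "x \<in> A" using assms by blast
  let ?H = "rt G B x"
  have retG: "ret G B x ?H" using assms(3,4) unfolding IND_def by blast
  have "ret F B x (rho F A G x ?H)"
    unfolding ret_def
  proof (intro conjI allI impI)
    show "0 < rho F A G x ?H" using rho_mono_lt[OF assms(1) xA, of 0 ?H] retG unfolding ret_def by simp
    show "(F ^^ rho F A G x ?H) x \<in> B" using rho_F[OF assms(1) xA] retG unfolding ret_def by simp
    fix j assume j: "0 < j \<and> j < rho F A G x ?H"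
    show "(F ^^ j) x \<notin> B"
    proof
      assume jB: "(F ^^ j) x \<in> B"
      then obtain i where i: "j = rho F A G x i" using hit_is_rho[OF assms(1) xA] assms(2) by blast
      have "i < ?H" using j i rho_mono_le[OF assms(1) xA, of ?H i] by (cases "i < ?H") auto
      moreover have "i > 0" using j i by (cases i) auto
      ultimately have "(G ^^ i) x \<notin> B" using retG unfolding ret_def by blast
      thus False using jB i rho_F[OF assms(1) xA] by simp
    qed
  qed
  thus ?thesis using ret_rt by blast
qed

lemma IND_compose:
  assumes "IND F A G" "B \<subseteq> A" "IND G B G2"
  shows "IND F B G2"
  unfolding IND_def
proof
  fix x assume x: "x \<in> B"
  have xA: "x \<in> A" using assms x by blast
  have c: "ret F B x (rho F A G x (rt G B x))" "rt F B x = rho F A G x (rt G B x)"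
    using IND_comp[OF assms x] by blast+
  have "(F ^^ rt F B x) x = (G ^^ rt G B x) x" using c(2) rho_F[OF assms(1) xA] by simp
  also have "\<dots> = G2 x" using assms(3) x unfolding IND_def by blast
  finally show "G2 x \<in> B \<and> ret F B x (rt F B x) \<and> (F ^^ rt F B x) x = G2 x"
    using c assms(3) x unfolding IND_def by simp
qed

lemma count_rho:
  assumes "IND F A G" "x \<in> A" "C \<subseteq> A"
  shows "card {j. j < rho F A G x H \<and> (F ^^ j) x \<in> C} = card {i. i < H \<and> (G ^^ i) x \<in> C}"
proof -
  let ?r = "rho F A G x"
  have "{j. j < ?r H \<and> (F ^^ j) x \<in> C} = ?r ` {i. i < H \<and> (G ^^ i) x \<in> C}"
  proof (rule set_eqI, rule iffI)
    fix j assume "j \<in> {j. j < ?r H \<and> (F ^^ j) x \<in> C}"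
    hence j: "j < ?r H" "(F ^^ j) x \<in> C" by auto
    then obtain i where i: "j = ?r i" using hit_is_rho[OF assms(1,2)] assms(3) by blast
    have "i < H" using j(1) i rho_mono_le[OF assms(1,2), of H i] by (cases "i < H") auto
    thus "j \<in> ?r ` {i. i < H \<and> (G ^^ i) x \<in> C}" using i j(2) rho_F[OF assms(1,2)] by auto
  next
    fix j assume "j \<in> ?r ` {i. i < H \<and> (G ^^ i) x \<in> C}"
    then obtain i where "j = ?r i" "i < H" "(G ^^ i) x \<in> C" by auto
    thus "j \<in> {j. j < ?r H \<and> (F ^^ j) x \<in> C}"
      using rho_mono_lt[OF assms(1,2)] rho_F[OF assms(1,2)] by auto
  qed
  moreover have "inj_on ?r {i. i < H \<and> (G ^^ i) x \<in> C}"
    using rho_smono[OF assms(1,2)] strict_mono_imp_inj_on by blast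
  ultimately show ?thesis by (simp add: card_image)
qed

lemma sum_lessThan_add: "(\<Sum>j<a+b. f j) = (\<Sum>j<a. f j) + (\<Sum>j<b. f (a + j)) " for f :: "nat \<Rightarrow> real"
  by (induction b) (simp_all add: add_Suc_right)

lemma sum_rho:
  fixes g :: "real \<Rightarrow> real"
  assumes "IND F A G" "x \<in> A"
  shows "(\<Sum>j<rho F A G x H. g ((F ^^ j) x)) =
         (\<Sum>i<H. \<Sum>j<rt F A ((G ^^ i) x). g ((F ^^ j) ((G ^^ i) x)))"
proof (induction H)
  case (Suc H)
  have "(\<Sum>j<rho F A G x (Suc H). g ((F ^^ j) x)) =
      (\<Sum>j<rho F A G x H. g ((F ^^ j) x)) + (\<Sum>j<rt F A ((G ^^ H) x). g ((F ^^ (rho F A G x H + j)) x))"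
    unfolding rho.simps by (rule sum_lessThan_add)
  also have "(\<Sum>j<rt F A ((G ^^ H) x). g ((F ^^ (rho F A G x H + j)) x)) =
             (\<Sum>j<rt F A ((G ^^ H) x). g ((F ^^ j) ((G ^^ H) x)))"
  proof (rule sum.cong)
    fix j
    have "(F ^^ (rho F A G x H + j)) x = (F ^^ j) ((F ^^ rho F A G x H) x)"
      by (metis add.commute fpa)
    thus "g ((F ^^ (rho F A G x H + j)) x) = g ((F ^^ j) ((G ^^ H) x))"
      using rho_F[OF assms] by simp
  qed simp
  finally show ?case using Suc by simp
qed simp

definition EQV :: "(real \<Rightarrow> real) \<Rightarrow> real set \<Rightarrow> ('b \<Rightarrow> real set) \<Rightarrow> real \<Rightarrow> real \<Rightarrow> bool" where
  "EQV F A P x y \<longleftrightarrow> rt F A x = rt F A y \<and> (\<forall>j<rt F A x. \<exists>b. (F ^^ j) x \<in> P b \<and> (F ^^ j) y \<in> P b)"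

lemma rig_rho:
  assumes "IND F A G" "x \<in> A" "y \<in> A" "\<And>i. i < H \<Longrightarrow> EQV F A P ((G ^^ i) x) ((G ^^ i) y)"
  shows "(\<forall>i\<le>H. rho F A G x i = rho F A G y i) \<and>
         (\<forall>j<rho F A G x H. \<exists>b. (F ^^ j) x \<in> P b \<and> (F ^^ j) y \<in> P b)"
proof -
  have eq: "\<forall>i\<le>H. rho F A G x i = rho F A G y i"
  proof (intro allI impI)
    fix i assume "i \<le> H"
    thus "rho F A G x i = rho F A G y i"
    proof (induction i)
      case (Suc i)
      thus ?case using assms(4)[of i] unfolding EQV_def by simp
    qed simp
  qed
  moreover have "\<forall>j<rho F A G x H. \<exists>b. (F ^^ j) x \<in> P b \<and> (F ^^ j) y \<in> P b"
  proof (intro allI impI)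
    fix j assume j: "j < rho F A G x H"
    obtain i where i: "rho F A G x i \<le> j" "j < rho F A G x (Suc i)" using rho_locate[OF assms(1,2)] by blast
    have iH: "i < H" using j i(1) rho_mono_le[OF assms(1,2), of H i] by (cases "i < H") auto
    have ie: "rho F A G x i = rho F A G y i" using eq iH by simp
    have e: "EQV F A P ((G ^^ i) x) ((G ^^ i) y)" using assms(4)[OF iH] .
    have lt: "j - rho F A G x i < rt F A ((G ^^ i) x)" using i by simp
    obtain b where b: "(F ^^ (j - rho F A G x i)) ((G ^^ i) x) \<in> P b"
                      "(F ^^ (j - rho F A G x i)) ((G ^^ i) y) \<in> P b"
      using e lt unfolding EQV_def by blast
    have "(F ^^ j) x = (F ^^ (j - rho F A G x i)) ((G ^^ i) x)" using rho_split[OF assms(1,2) i(1)] .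
    moreover have "(F ^^ j) y = (F ^^ (j - rho F A G x i)) ((G ^^ i) y)"
      using rho_split[OF assms(1,3), of i j] i(1) ie by simp
    ultimately show "\<exists>b. (F ^^ j) x \<in> P b \<and> (F ^^ j) y \<in> P b" using b by auto
  qed
  ultimately show ?thesis by blast
qed

lemma cov_rho:
  assumes "IND F A G" "z \<in> A" "(G ^^ h) z = y" "j < rt F A y" "(F ^^ j) y = x"
  shows "(F ^^ (rho F A G z h + j)) z = x \<and> rho F A G z h + j < rho F A G z (Suc h)"
proof -
  have "(F ^^ (rho F A G z h + j)) z = (F ^^ j) ((F ^^ rho F A G z h) z)"
    by (simp only: add.commute[of "rho F A G z h"] fpa)
  thus ?thesis using rho_F[OF assms(1,2)] assms by simp
qed

definition Lz :: "('a::finite) iet_data \<Rightarrow> real" where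
  "Lz S = (case S of (pt, pb, lam) \<Rightarrow> sum lam UNIV)"
definition Ax :: "('a::finite) iet_data \<Rightarrow> real set" where
  "Ax S = {0..<Lz S}"
definition Sb :: "('a::finite) iet_data \<Rightarrow> 'a \<Rightarrow> real set" where
  "Sb S a = (case S of (pt, pb, lam) \<Rightarrow> subint pt lam a)"
definition VK :: "('a::finite) iet_data \<Rightarrow> bool" where
  "VK S = (case S of (pt, pb, lam) \<Rightarrow> vg pt pb lam \<and> keane pt pb lam)"

lemma VK_basic:
  assumes "VK S"
  shows "\<forall>a. Sb S a \<subseteq> Ax S" "\<forall>a b. a \<noteq> b \<longrightarrow> Sb S a \<inter> Sb S b = {}"
    "\<forall>x\<in>Ax S. \<exists>a. x \<in> Sb S a" "\<forall>x\<in>Ax S. T0 S x \<in> Ax S" "Lz S > 0"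
    "\<forall>a. Sb S a \<noteq> {}"
proof -
  obtain pt pb lam where S: "S = (pt, pb, lam)" by (cases S)
  interpret stp pt pb lam using assms unfolding S VK_def by unfold_locales auto
  show "\<forall>a. Sb S a \<subseteq> Ax S" unfolding S Sb_def Ax_def Lz_def using subint_sub[OF lnn] by simp
  show "\<forall>a b. a \<noteq> b \<longrightarrow> Sb S a \<inter> Sb S b = {}" unfolding S Sb_def using subint_disj[OF ipt lnn] by simp
  show "\<forall>x\<in>Ax S. \<exists>a. x \<in> Sb S a" unfolding S Sb_def Ax_def Lz_def using subint_cover[OF bpt lnn] by simp
  show "\<forall>x\<in>Ax S. T0 S x \<in> Ax S" unfolding S T0_def Ax_def Lz_def using F_range by simp
  show "\<forall>a. Sb S a \<noteq> {}" unfolding S Sb_def using ep_in by auto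
  thus "Lz S > 0" using \<open>\<forall>a. Sb S a \<subseteq> Ax S\<close> unfolding Ax_def by fastforce
qed

lemma VK_step:
  assumes "VK S"
  defines "S' \<equiv> rv_step S"
  shows "VK S' \<and> Lz S' \<le> Lz S \<and> (\<forall>a. \<exists>b. Sb S' a \<subseteq> Sb S b) \<and>
     (\<forall>a. (\<forall>z\<in>Sb S' a. T0 S z \<in> Ax S' \<and> T0 S' z = T0 S z) \<or>
          (\<exists>w. \<forall>z\<in>Sb S' a. T0 S z \<in> Sb S w \<and> T0 S z \<notin> Ax S' \<and> T0 S' z = T0 S (T0 S z))) \<and>
     (\<forall>u\<in>Ax S - Ax S'. \<exists>z\<in>Ax S'. T0 S z = u)"
proof -
  obtain pt pb lam where S: "S = (pt, pb, lam)" by (cases S)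
  interpret stp pt pb lam using assms unfolding S VK_def by unfold_locales auto
  obtain pt' pb' lam' where S': "rv_step (pt, pb, lam) = (pt', pb', lam')" by (cases "rv_step (pt, pb, lam)")
  have ok: "stepok pt pb lam pt' pb' lam'" using step_ok S' by simp
  have R5: "\<forall>u\<in>{sum lam' UNIV..<sum lam UNIV}. \<exists>z\<in>{0..<sum lam' UNIV}. F z = u"
    using ok unfolding stepok_def by blast
  have R5': "\<forall>u\<in>{0..<sum lam UNIV} - {0..<sum lam' UNIV}. \<exists>z\<in>{0..<sum lam' UNIV}. F z = u"
  proof
    fix u assume "u \<in> {0..<sum lam UNIV} - {0..<sum lam' UNIV}"
    hence "u \<in> {sum lam' UNIV..<sum lam UNIV}" by auto
    thus "\<exists>z\<in>{0..<sum lam' UNIV}. F z = u" using R5 by blast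
  qed
  show ?thesis using ok R5' unfolding S'_def S S' unfolding stepok_def VK_def Lz_def Sb_def Ax_def T0_def
    by simp
qed

lemma step_IND:
  assumes "VK S"
  shows "IND (T0 S) (Ax (rv_step S)) (T0 (rv_step S))"
    "\<forall>a. (\<forall>z\<in>Sb (rv_step S) a. rt (T0 S) (Ax (rv_step S)) z = 1) \<or>
         (\<exists>w. \<forall>z\<in>Sb (rv_step S) a. rt (T0 S) (Ax (rv_step S)) z = 2 \<and> T0 S z \<in> Sb S w)"
proof -
  let ?S' = "rv_step S"
  have st: "VK ?S' \<and> Lz ?S' \<le> Lz S \<and> (\<forall>a. \<exists>b. Sb ?S' a \<subseteq> Sb S b) \<and>
     (\<forall>a. (\<forall>z\<in>Sb ?S' a. T0 S z \<in> Ax ?S' \<and> T0 ?S' z = T0 S z) \<or>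
          (\<exists>w. \<forall>z\<in>Sb ?S' a. T0 S z \<in> Sb S w \<and> T0 S z \<notin> Ax ?S' \<and> T0 ?S' z = T0 S (T0 S z)))"
    using VK_step[OF assms] by blast
  have b': "\<forall>x\<in>Ax ?S'. \<exists>a. x \<in> Sb ?S' a" "\<forall>x\<in>Ax ?S'. T0 ?S' x \<in> Ax ?S'"
    using VK_basic[of ?S'] st by blast+
  have cell: "\<And>a. (\<forall>z\<in>Sb ?S' a. ret (T0 S) (Ax ?S') z 1 \<and> (T0 S ^^ 1) z = T0 ?S' z) \<or>
         (\<exists>w. \<forall>z\<in>Sb ?S' a. ret (T0 S) (Ax ?S') z 2 \<and> (T0 S ^^ 2) z = T0 ?S' z \<and> T0 S z \<in> Sb S w)"
  proof -
    fix a
    have sa: "Sb ?S' a \<subseteq> Ax ?S'" using VK_basic(1)[of ?S'] st by blast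
    show "?thesis a"
    proof (cases "\<forall>z\<in>Sb ?S' a. T0 S z \<in> Ax ?S' \<and> T0 ?S' z = T0 S z")
      case True
      thus ?thesis unfolding ret_def by auto
    next
      case False
      then obtain w where w: "\<forall>z\<in>Sb ?S' a. T0 S z \<in> Sb S w \<and> T0 S z \<notin> Ax ?S' \<and> T0 ?S' z = T0 S (T0 S z)"
        using st by blast
      { fix z assume z: "z \<in> Sb ?S' a"
        have "T0 ?S' z \<in> Ax ?S'" using b'(2) sa z by blast
        hence "ret (T0 S) (Ax ?S') z 2" using w z unfolding ret_def
          by (auto simp: numeral_2_eq_2 less_Suc_eq)
        moreover have "(T0 S ^^ 2) z = T0 ?S' z" using w z by (simp add: numeral_2_eq_2)
        ultimately have "ret (T0 S) (Ax ?S') z 2 \<and> (T0 S ^^ 2) z = T0 ?S' z \<and> T0 S z \<in> Sb S w"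
          using w z by blast }
      thus ?thesis by blast
    qed
  qed
  show "IND (T0 S) (Ax ?S') (T0 ?S')"
    unfolding IND_def
  proof
    fix x assume x: "x \<in> Ax ?S'"
    then obtain a where a: "x \<in> Sb ?S' a" using b' by blast
    obtain h where h: "ret (T0 S) (Ax ?S') x h" "(T0 S ^^ h) x = T0 ?S' x" using cell[of a] a by blast
    show "T0 ?S' x \<in> Ax ?S' \<and> ret (T0 S) (Ax ?S') x (rt (T0 S) (Ax ?S') x) \<and>
          (T0 S ^^ rt (T0 S) (Ax ?S') x) x = T0 ?S' x"
      using h ret_rt[OF h(1)] b' x by simp
  qed
  show "\<forall>a. (\<forall>z\<in>Sb ?S' a. rt (T0 S) (Ax ?S') z = 1) \<or>
         (\<exists>w. \<forall>z\<in>Sb ?S' a. rt (T0 S) (Ax ?S') z = 2 \<and> T0 S z \<in> Sb S w)"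
    using cell ret_rt by metis
qed

lemma Ax_mono: "Lz S' \<le> Lz S \<Longrightarrow> Ax S' \<subseteq> Ax S"
  unfolding Ax_def by auto

lemma level:
  assumes "VK S"
  shows "VK (rv S k) \<and> Lz (rv S k) \<le> Lz S \<and> IND (T0 S) (Ax (rv S k)) (T0 (rv S k)) \<and>
    (\<forall>a x y. x \<in> Sb (rv S k) a \<longrightarrow> y \<in> Sb (rv S k) a \<longrightarrow> EQV (T0 S) (Ax (rv S k)) (Sb S) x y) \<and>
    (\<forall>x\<in>Ax S. \<exists>y\<in>Ax (rv S k). \<exists>j<rt (T0 S) (Ax (rv S k)) y. (T0 S ^^ j) y = x)"
proof (induction k)
  case 0
  let ?F = "T0 S" and ?A = "Ax S"
  have r1: "\<And>x. x \<in> ?A \<Longrightarrow> rt ?F ?A x = 1 \<and> ret ?F ?A x 1"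
  proof -
    fix x assume "x \<in> ?A"
    hence "ret ?F ?A x 1" using VK_basic(4)[OF assms] unfolding ret_def by auto
    thus "rt ?F ?A x = 1 \<and> ret ?F ?A x 1" using ret_rt by blast
  qed
  have ind: "IND ?F ?A ?F" unfolding IND_def using r1 VK_basic(4)[OF assms] by simp
  have eqv: "\<forall>a x y. x \<in> Sb S a \<longrightarrow> y \<in> Sb S a \<longrightarrow> EQV ?F ?A (Sb S) x y"
  proof (intro allI impI)
    fix a x y assume x: "x \<in> Sb S a" and y: "y \<in> Sb S a"
    have xA: "x \<in> ?A" and yA: "y \<in> ?A" using x y VK_basic(1)[OF assms] by blast+
    have rx: "rt ?F ?A x = 1" and ry: "rt ?F ?A y = 1" using r1 xA yA by blast+
    show "EQV ?F ?A (Sb S) x y" unfolding EQV_def rx ry using x y by (simp, blast)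
  qed
  have cov: "\<forall>x\<in>?A. \<exists>y\<in>?A. \<exists>j<rt ?F ?A y. (?F ^^ j) y = x"
  proof
    fix x assume x: "x \<in> ?A"
    have "0 < rt ?F ?A x" using r1[OF x] by simp
    moreover have "(?F ^^ 0) x = x" by simp
    ultimately show "\<exists>y\<in>?A. \<exists>j<rt ?F ?A y. (?F ^^ j) y = x" using x by blast
  qed
  have "rv S 0 = S" by simp
  thus ?case using assms ind eqv cov by (simp only:) simp
next
  case (Suc k)
  let ?Sk = "rv S k" and ?S' = "rv S (Suc k)"
  let ?F = "T0 S" and ?A = "Ax ?Sk" and ?G = "T0 ?Sk" and ?A' = "Ax ?S'"
  have S': "?S' = rv_step ?Sk" by simp
  have vk: "VK ?Sk" and lz: "Lz ?Sk \<le> Lz S" and ind: "IND ?F ?A ?G"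
    and eqv: "\<forall>a x y. x \<in> Sb ?Sk a \<longrightarrow> y \<in> Sb ?Sk a \<longrightarrow> EQV ?F ?A (Sb S) x y"
    and cov: "\<forall>x\<in>Ax S. \<exists>y\<in>?A. \<exists>j<rt ?F ?A y. (?F ^^ j) y = x"
    using Suc.IH by blast+
  have st: "VK ?S' \<and> Lz ?S' \<le> Lz ?Sk \<and> (\<forall>a. \<exists>b. Sb ?S' a \<subseteq> Sb ?Sk b) \<and>
     (\<forall>u\<in>Ax ?Sk - Ax ?S'. \<exists>z\<in>Ax ?S'. T0 ?Sk z = u)"
    using VK_step[OF vk] S' by auto
  have ind1: "IND ?G ?A' (T0 ?S')" using step_IND(1)[OF vk] S' by simp
  have cells: "\<forall>a. (\<forall>z\<in>Sb ?S' a. rt ?G ?A' z = 1) \<or>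
         (\<exists>w. \<forall>z\<in>Sb ?S' a. rt ?G ?A' z = 2 \<and> ?G z \<in> Sb ?Sk w)"
    using step_IND(2)[OF vk] S' by simp
  have sub: "?A' \<subseteq> ?A" using Ax_mono st by blast
  have indn: "IND ?F ?A' (T0 ?S')" using IND_compose[OF ind sub ind1] .
  have eqvn: "\<forall>a x y. x \<in> Sb ?S' a \<longrightarrow> y \<in> Sb ?S' a \<longrightarrow> EQV ?F ?A' (Sb S) x y"
  proof (intro allI impI)
    fix a x y assume x: "x \<in> Sb ?S' a" and y: "y \<in> Sb ?S' a"
    have xA': "x \<in> ?A'" and yA': "y \<in> ?A'" using VK_basic(1)[of ?S'] st x y by blast+
    have xA: "x \<in> ?A" and yA: "y \<in> ?A" using sub xA' yA' by blast+
    obtain b where b: "Sb ?S' a \<subseteq> Sb ?Sk b" using st by blast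
    have e0: "EQV ?F ?A (Sb S) x y" using eqv b x y by blast
    obtain H where H: "rt ?G ?A' x = H" "rt ?G ?A' y = H"
      "\<And>i. i < H \<Longrightarrow> EQV ?F ?A (Sb S) ((?G ^^ i) x) ((?G ^^ i) y)"
    proof (cases "\<forall>z\<in>Sb ?S' a. rt ?G ?A' z = 1")
      case True
      thus ?thesis using that[of 1] x y e0 by auto
    next
      case False
      then obtain w where w: "\<forall>z\<in>Sb ?S' a. rt ?G ?A' z = 2 \<and> ?G z \<in> Sb ?Sk w" using cells by blast
      have e1: "EQV ?F ?A (Sb S) (?G x) (?G y)" using eqv w x y by blast
      have "\<And>i. i < 2 \<Longrightarrow> EQV ?F ?A (Sb S) ((?G ^^ i) x) ((?G ^^ i) y)"
      proof -
        fix i :: nat assume "i < 2"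
        hence "i = 0 \<or> i = 1" by auto
        thus "EQV ?F ?A (Sb S) ((?G ^^ i) x) ((?G ^^ i) y)" using e0 e1 by auto
      qed
      thus ?thesis using that[of 2] w x y by auto
    qed
    have rx: "rt ?F ?A' x = rho ?F ?A ?G x H" using IND_comp[OF ind sub ind1 xA'] H by simp
    have ry: "rt ?F ?A' y = rho ?F ?A ?G y H" using IND_comp[OF ind sub ind1 yA'] H by simp
    have rr: "(\<forall>i\<le>H. rho ?F ?A ?G x i = rho ?F ?A ?G y i) \<and>
         (\<forall>j<rho ?F ?A ?G x H. \<exists>b. (?F ^^ j) x \<in> Sb S b \<and> (?F ^^ j) y \<in> Sb S b)"
      using rig_rho[OF ind xA yA H(3)] by blast
    show "EQV ?F ?A' (Sb S) x y" unfolding EQV_def using rx ry rr by simp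
  qed
  have covn: "\<forall>x\<in>Ax S. \<exists>y\<in>?A'. \<exists>j<rt ?F ?A' y. (?F ^^ j) y = x"
  proof
    fix x assume x: "x \<in> Ax S"
    obtain y j where y: "y \<in> ?A" "j < rt ?F ?A y" "(?F ^^ j) y = x" using cov x by blast
    obtain z h where z: "z \<in> ?A'" "(?G ^^ h) z = y" "h < rt ?G ?A' z"
    proof (cases "y \<in> ?A'")
      case True
      have "rt ?G ?A' y > 0" using IND_rt_pos[OF ind1 True] .
      thus ?thesis using that[of y 0] True by simp
    next
      case False
      then obtain z where z: "z \<in> ?A'" "?G z = y" using st y(1) by blast
      have r: "ret ?G ?A' z (rt ?G ?A' z)" using ind1 z(1) unfolding IND_def by blast
      have "rt ?G ?A' z \<noteq> 1"
      proof
        assume "rt ?G ?A' z = 1"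
        hence "(?G ^^ 1) z \<in> ?A'" using r unfolding ret_def by simp
        thus False using z False by simp
      qed
      moreover have "rt ?G ?A' z > 0" using r unfolding ret_def by blast
      ultimately have "1 < rt ?G ?A' z" by simp
      thus ?thesis using that[of z 1] z by simp
    qed
    have zA: "z \<in> ?A" using sub z(1) by blast
    have c: "(?F ^^ (rho ?F ?A ?G z h + j)) z = x \<and> rho ?F ?A ?G z h + j < rho ?F ?A ?G z (Suc h)"
      using cov_rho[OF ind zA z(2) _ y(3)] y(2) z(2) by blast
    have sh: "Suc h \<le> rt ?G ?A' z" using z(3) by simp
    have "rho ?F ?A ?G z (Suc h) \<le> rho ?F ?A ?G z (rt ?G ?A' z)"
      by (rule rho_mono_le[OF ind zA sh])
    also have "\<dots> = rt ?F ?A' z" using IND_comp[OF ind sub ind1 z(1)] by simp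
    finally show "\<exists>y\<in>?A'. \<exists>j<rt ?F ?A' y. (?F ^^ j) y = x" using c z(1) by (intro bexI exI[of _ "rho ?F ?A ?G z h + j"]) auto
  qed
  have "Lz ?S' \<le> Lz S" using st lz by linarith
  thus ?case using st indn eqvn covn by blast
qed

lemma rv_add: "rv S (a + b) = rv (rv S a) b"
  by (induction b) auto

lemma rv_step_top: "top_type S \<Longrightarrow> fst (rv_step S) = fst S"
  by (cases S) (auto simp: rv_step_def top_type_def Let_def)

lemma rv_step_bot: "\<not> top_type S \<Longrightarrow> fst (snd (rv_step S)) = fst (snd S)"
  by (cases S) (auto simp: rv_step_def top_type_def Let_def)

lemma winner_top: "top_type S \<Longrightarrow> rv_winner S = last_sym (fst S)"
  by (cases S) (auto simp: rv_winner_def)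

lemma winner_bot: "\<not> top_type S \<Longrightarrow> rv_winner S = last_sym (fst (snd S))"
  by (cases S) (auto simp: rv_winner_def)

lemma type_changes:
  fixes s :: "('a::finite) iet_data"
  assumes ic: "inf_complete s" and c2: "CARD('a) \<ge> 2"
  shows "\<exists>n>t0. top_type (rv s n) \<noteq> top_type (rv s t0)"
proof (rule ccontr)
  assume ne: "\<not> ?thesis"
  have same: "\<And>n. n \<ge> t0 \<Longrightarrow> top_type (rv s n) = top_type (rv s t0)"
  proof -
    fix n assume n: "n \<ge> t0"
    show "top_type (rv s n) = top_type (rv s t0)"
    proof (cases "n = t0")
      case False
      hence "n > t0" using n by simp
      thus ?thesis using ne by blast
    qed simp
  qed
  define w where "w = rv_winner (rv s t0)"
  have constw: "\<And>n. n \<ge> t0 \<Longrightarrow> rv_winner (rv s n) = w"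
  proof (cases "top_type (rv s t0)")
    case True
    have "\<And>n. n \<ge> t0 \<Longrightarrow> fst (rv s n) = fst (rv s t0)"
    proof -
      fix n assume "n \<ge> t0"
      thus "fst (rv s n) = fst (rv s t0)"
      proof (induction n rule: dec_induct)
        case (step n)
        thus ?case using rv_step_top[of "rv s n"] same[of n] True by simp
      qed simp
    qed
    thus "\<And>n. n \<ge> t0 \<Longrightarrow> rv_winner (rv s n) = w"
    proof -
      fix n assume n: "n \<ge> t0" and f: "\<And>n. n \<ge> t0 \<Longrightarrow> fst (rv s n) = fst (rv s t0)"
      have "rv_winner (rv s n) = last_sym (fst (rv s n))" using winner_top same[OF n] True by simp
      also have "\<dots> = last_sym (fst (rv s t0))" using f[OF n] by simp
      also have "\<dots> = w" unfolding w_def using winner_top[OF True] by simp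
      finally show "rv_winner (rv s n) = w" .
    qed
  next
    case False
    have "\<And>n. n \<ge> t0 \<Longrightarrow> fst (snd (rv s n)) = fst (snd (rv s t0))"
    proof -
      fix n assume "n \<ge> t0"
      thus "fst (snd (rv s n)) = fst (snd (rv s t0))"
      proof (induction n rule: dec_induct)
        case (step n)
        thus ?case using rv_step_bot[of "rv s n"] same[of n] False by simp
      qed simp
    qed
    thus "\<And>n. n \<ge> t0 \<Longrightarrow> rv_winner (rv s n) = w"
    proof -
      fix n assume n: "n \<ge> t0" and f: "\<And>n. n \<ge> t0 \<Longrightarrow> fst (snd (rv s n)) = fst (snd (rv s t0))"
      have "rv_winner (rv s n) = last_sym (fst (snd (rv s n)))" using winner_bot same[OF n] False by simp
      also have "\<dots> = last_sym (fst (snd (rv s t0)))" using f[OF n] by simp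
      also have "\<dots> = w" unfolding w_def using winner_bot[OF False] by simp
      finally show "rv_winner (rv s n) = w" .
    qed
  qed
  obtain a :: 'a where a: "a \<noteq> w"
  proof -
    have "\<not> (\<forall>a::'a. a = w)"
    proof
      assume "\<forall>a::'a. a = w"
      hence "(UNIV::'a set) = {w}" by auto
      hence "card (UNIV::'a set) = card {w}" by (rule arg_cong)
      thus False using c2 by simp
    qed
    thus ?thesis using that by blast
  qed
  have "\<exists>\<^sub>\<infinity>n. rv_winner (rv s n) = a" using ic unfolding inf_complete_def by blast
  hence inf: "\<forall>m. \<exists>n\<ge>m. rv_winner (rv s n) = a" unfolding INFM_nat_le .
  obtain n where "n \<ge> t0" "rv_winner (rv s n) = a" using inf by blast
  thus False using constw a by simp
qed

lemma ztime_smono: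
  fixes s :: "('a::finite) iet_data"
  assumes ic: "inf_complete s" and c2: "CARD('a) \<ge> 2"
  shows "strict_mono (ztime s)"
proof (rule strict_monoI_Suc)
  fix k
  let ?P = "\<lambda>n. ztime s k < n \<and> top_type (rv s n) \<noteq> top_type (rv s (ztime s k))"
  obtain n where "?P n"
    using type_changes[OF ic c2] by blast
  hence "?P (LEAST n. ?P n)" by (rule LeastI)
  hence "?P (ztime s (Suc k))" by simp
  thus "ztime s k < ztime s (Suc k)" by blast
qed

lemma ind_len_eq: "ind_len s n = Lz (zdata s n)"
  unfolding ind_len_def Lz_def ..

lemma ind_sub_eq: "ind_sub s n a = Sb (zdata s n) a"
  unfolding ind_sub_def Sb_def ..

lemma ret_time_eq: "ret_time s n x = rt (T0 s) (Ax (zdata s n)) x"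
  unfolding ret_time_def rt_def Ax_def ind_len_eq ..

lemma ind_left_in: "VK (zdata s n) \<Longrightarrow> ind_left s n a \<in> Sb (zdata s n) a"
  unfolding ind_left_def Sb_def VK_def vg_def subint_def
  by (cases "zdata s n") auto

lemma Zmat_eq: "Zmat s m n a b = card {j. j < rt (T0 s) (Ax (zdata s n)) (ind_left s n a) \<and>
     (T0 s ^^ j) (ind_left s n a) \<in> Sb (zdata s m) b}"
  unfolding Zmat_def ret_time_eq ind_sub_eq ..

lemma zdata0: "zdata s 0 = s" unfolding zdata_def by simp

lemma sum_if_card: "(\<Sum>j<(r::nat). if P j then c else 0) = (c::real) * card {j. j < r \<and> P j}"
proof (induction r)
  case (Suc r)
  have e: "{j. j < Suc r \<and> P j} = (if P r then insert r {j. j < r \<and> P j} else {j. j < r \<and> P j})"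
    by (auto simp: less_Suc_eq)
  show ?case using Suc by (simp add: e algebra_simps)
qed simp

locale mc =
  fixes pt pb :: "'a::finite \<Rightarrow> nat" and lam :: "'a \<Rightarrow> real" and \<omega> :: "'a \<Rightarrow> real"
    and nk :: "nat \<Rightarrow> nat" and N K :: nat and V :: real
  assumes vi: "valid_iet pt pb lam" and kn: "keane pt pb lam" and ic: "inf_complete (pt, pb, lam)"
    and nk: "strict_mono nk" and Kpos: "K > 0"
    and Zb: "\<forall>k a b. 1 \<le> Zmat (pt, pb, lam) (nk k) (nk k + N) a b \<and> Zmat (pt, pb, lam) (nk k) (nk k + N) a b \<le> K"
    and Vpos: "V > 0"
    and Vb: "\<forall>k. \<forall>v\<in>E_cs (pt, pb, lam). vnorm (matvec (Zmat (pt, pb, lam) 0 (nk k)) v) \<le> V * vnorm v"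
    and om: "\<omega> \<in> E_cs (pt, pb, lam)"
begin

abbreviation "s \<equiv> (pt, pb, lam)"
abbreviation "F \<equiv> T0 s"
abbreviation "Zd n \<equiv> zdata s n"
abbreviation "Aa n \<equiv> Ax (zdata s n)"
abbreviation "GG n \<equiv> T0 (zdata s n)"
abbreviation "f \<equiv> f_iet pt lam \<omega>"

lemma c2: "CARD('a) \<ge> 2" using vi unfolding valid_iet_def by blast
lemma VKs: "VK s" using vi kn unfolding VK_def vg_def valid_iet_def by simp
lemma Lz1: "Lz s = 1" using vi unfolding Lz_def valid_iet_def by simp
lemma zsm: "strict_mono (ztime s)" using ztime_smono[OF ic c2] .
lemma zd: "Zd n = rv s (ztime s n)" unfolding zdata_def ..

lemma lev: "VK (Zd n) \<and> Lz (Zd n) \<le> Lz s \<and> IND F (Aa n) (GG n) \<and>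
    (\<forall>a x y. x \<in> Sb (Zd n) a \<longrightarrow> y \<in> Sb (Zd n) a \<longrightarrow> EQV F (Aa n) (Sb s) x y) \<and>
    (\<forall>x\<in>Ax s. \<exists>y\<in>Aa n. \<exists>j<rt F (Aa n) y. (F ^^ j) y = x)"
  unfolding zd by (rule level[OF VKs, of "ztime s n"])

lemma VKn: "VK (Zd n)" using lev by blast
lemma INDn: "IND F (Aa n) (GG n)" using lev by blast

lemma lev2:
  assumes "n \<le> n'"
  shows "Lz (Zd n') \<le> Lz (Zd n) \<and> IND (GG n) (Aa n') (GG n') \<and>
    (\<forall>a x y. x \<in> Sb (Zd n') a \<longrightarrow> y \<in> Sb (Zd n') a \<longrightarrow> EQV (GG n) (Aa n') (Sb (Zd n)) x y) \<and>
    (\<forall>x\<in>Aa n. \<exists>y\<in>Aa n'. \<exists>j<rt (GG n) (Aa n') y. (GG n ^^ j) y = x)"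
proof -
  have le: "ztime s n \<le> ztime s n'" using zsm assms strict_mono_less_eq by blast
  have "Zd n' = rv (Zd n) (ztime s n' - ztime s n)"
    unfolding zd rv_add[symmetric] using le by simp
  thus ?thesis using level[OF VKn[of n], of "ztime s n' - ztime s n"] by simp
qed

lemma sub_A: "n \<le> n' \<Longrightarrow> Aa n' \<subseteq> Aa n" using lev2 Ax_mono by blast

lemma f_cell: "z \<in> Sb s b \<Longrightarrow> f z = \<omega> b"
  using f_iet_on[of pt lam z b \<omega>] vi unfolding Sb_def valid_iet_def bij_betw_def
  by (simp add: less_imp_le)

definition "B = V * vnorm \<omega>"

lemma beta_eq:
  assumes y: "y \<in> Sb (Zd n) a"
  shows "(\<Sum>j<rt F (Aa n) y. f ((F ^^ j) y)) = matvec (Zmat s 0 n) \<omega> a"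
proof -
  let ?p = "ind_left s n a"
  have p: "?p \<in> Sb (Zd n) a" using ind_left_in[OF VKn] .
  have e: "EQV F (Aa n) (Sb s) y ?p" using lev y p by blast
  let ?r = "rt F (Aa n) ?p"
  have r: "rt F (Aa n) y = ?r" using e unfolding EQV_def by simp
  have "(\<Sum>j<rt F (Aa n) y. f ((F ^^ j) y)) = (\<Sum>j<?r. f ((F ^^ j) ?p))"
    unfolding r
  proof (rule sum.cong)
    fix j assume "j \<in> {..<?r}"
    then obtain b where "(F ^^ j) y \<in> Sb s b" "(F ^^ j) ?p \<in> Sb s b" using e r unfolding EQV_def by auto
    thus "f ((F ^^ j) y) = f ((F ^^ j) ?p)" using f_cell by simp
  qed simp
  also have "\<dots> = (\<Sum>j<?r. \<Sum>b\<in>UNIV. if (F ^^ j) ?p \<in> Sb s b then \<omega> b else 0)"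
    unfolding f_iet_def Sb_def by simp
  also have "\<dots> = (\<Sum>b\<in>UNIV. \<Sum>j<?r. if (F ^^ j) ?p \<in> Sb s b then \<omega> b else 0)"
    by (rule sum.swap)
  also have "\<dots> = (\<Sum>b\<in>UNIV. \<omega> b * card {j. j < ?r \<and> (F ^^ j) ?p \<in> Sb s b})"
    by (simp add: sum_if_card)
  also have "\<dots> = matvec (Zmat s 0 n) \<omega> a"
    unfolding matvec_def Zmat_eq zdata0 by (simp add: mult.commute)
  finally show ?thesis .
qed

lemma beta_bound:
  assumes y: "y \<in> Aa (nk k)"
  shows "\<bar>\<Sum>j<rt F (Aa (nk k)) y. f ((F ^^ j) y)\<bar> \<le> B"
proof -
  obtain a where a: "y \<in> Sb (Zd (nk k)) a" using VK_basic(3)[OF VKn] y by blast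
  have "\<bar>matvec (Zmat s 0 (nk k)) \<omega> a\<bar> \<le> vnorm (matvec (Zmat s 0 (nk k)) \<omega>)"
    unfolding vnorm_def by (rule member_le_sum) auto
  also have "\<dots> \<le> B" unfolding B_def using Vb om by blast
  finally show ?thesis using beta_eq[OF a] by simp
qed

lemma count_cell:
  assumes nn: "n \<le> n'" and y: "y \<in> Sb (Zd n') c"
  shows "card {i. i < rt (GG n) (Aa n') y \<and> (GG n ^^ i) y \<in> Sb (Zd n) b} = Zmat s n n' c b"
proof -
  let ?p = "ind_left s n' c"
  have p: "?p \<in> Sb (Zd n') c" using ind_left_in[OF VKn] .
  have pA': "?p \<in> Aa n'" using VK_basic(1)[OF VKn] p by blast
  have sub: "Aa n' \<subseteq> Aa n" using sub_A[OF nn] .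
  have ind2: "IND (GG n) (Aa n') (GG n')" using lev2[OF nn] by blast
  have C: "Sb (Zd n) b \<subseteq> Aa n" using VK_basic(1)[OF VKn] by blast
  have "Zmat s n n' c b = card {j. j < rt F (Aa n') ?p \<and> (F ^^ j) ?p \<in> Sb (Zd n) b}"
    unfolding Zmat_eq ..
  also have "rt F (Aa n') ?p = rho F (Aa n) (GG n) ?p (rt (GG n) (Aa n') ?p)"
    using IND_comp[OF INDn sub ind2 pA'] by blast
  also have "card {j. j < rho F (Aa n) (GG n) ?p (rt (GG n) (Aa n') ?p) \<and> (F ^^ j) ?p \<in> Sb (Zd n) b}
     = card {i. i < rt (GG n) (Aa n') ?p \<and> (GG n ^^ i) ?p \<in> Sb (Zd n) b}"
    using count_rho[OF INDn _ C] pA' sub by blast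
  also have "{i. i < rt (GG n) (Aa n') ?p \<and> (GG n ^^ i) ?p \<in> Sb (Zd n) b} =
             {i. i < rt (GG n) (Aa n') y \<and> (GG n ^^ i) y \<in> Sb (Zd n) b}"
  proof -
    have e: "EQV (GG n) (Aa n') (Sb (Zd n)) y ?p" using lev2[OF nn] y p by blast
    have r: "rt (GG n) (Aa n') y = rt (GG n) (Aa n') ?p" using e unfolding EQV_def by simp
    have disj: "\<And>u v. u \<noteq> v \<Longrightarrow> Sb (Zd n) u \<inter> Sb (Zd n) v = {}" using VK_basic(2)[OF VKn] by blast
    show ?thesis
    proof (rule Collect_cong)
      fix i
      show "(i < rt (GG n) (Aa n') ?p \<and> (GG n ^^ i) ?p \<in> Sb (Zd n) b) =
            (i < rt (GG n) (Aa n') y \<and> (GG n ^^ i) y \<in> Sb (Zd n) b)"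
      proof (cases "i < rt (GG n) (Aa n') y")
        case True
        then obtain b0 where "(GG n ^^ i) y \<in> Sb (Zd n) b0" "(GG n ^^ i) ?p \<in> Sb (Zd n) b0"
          using e unfolding EQV_def by blast
        note bb = this
        have "(GG n ^^ i) ?p \<in> Sb (Zd n) b \<longleftrightarrow> (GG n ^^ i) y \<in> Sb (Zd n) b"
        proof (cases "b = b0")
          case True thus ?thesis using bb by simp
        next
          case False
          hence "Sb (Zd n) b \<inter> Sb (Zd n) b0 = {}" using disj by blast
          thus ?thesis using bb by blast
        qed
        thus ?thesis using True r by simp
      qed (use r in simp)
    qed
  qed
  finally show ?thesis by simp
qed

lemma H_sum:
  assumes nn: "n \<le> n'" and w: "w \<in> Aa n'"
  shows "rt (GG n) (Aa n') w = (\<Sum>b\<in>UNIV. card {i. i < rt (GG n) (Aa n') w \<and> (GG n ^^ i) w \<in> Sb (Zd n) b})"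
proof -
  let ?H = "rt (GG n) (Aa n') w"
  have wA: "w \<in> Aa n" using sub_A[OF nn] w by blast
  have GA: "\<And>i. (GG n ^^ i) w \<in> Aa n"
  proof -
    fix i show "(GG n ^^ i) w \<in> Aa n"
      by (induction i) (use wA VK_basic(4)[OF VKn] in auto)
  qed
  have U: "{..<?H} = (\<Union>b\<in>UNIV. {i. i < ?H \<and> (GG n ^^ i) w \<in> Sb (Zd n) b})"
  proof (rule set_eqI)
    fix i
    obtain b where "(GG n ^^ i) w \<in> Sb (Zd n) b" using GA[of i] VK_basic(3)[OF VKn] by blast
    thus "i \<in> {..<?H} \<longleftrightarrow> i \<in> (\<Union>b\<in>UNIV. {i. i < ?H \<and> (GG n ^^ i) w \<in> Sb (Zd n) b})"
      by auto
  qed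
  have "card {..<?H} = (\<Sum>b\<in>UNIV. card {i. i < ?H \<and> (GG n ^^ i) w \<in> Sb (Zd n) b})"
    unfolding U
    by (rule card_UN_disjoint) (use VK_basic(2)[OF VKn] in auto)
  thus ?thesis by simp
qed

end

context mc begin

lemma next_visit:
  assumes y: "y \<in> Sb (Zd (nk k)) a"
  shows "\<exists>e. 1 \<le> e \<and> e \<le> 2 * (CARD('a) * K) \<and> (GG (nk k) ^^ e) y \<in> Sb (Zd (nk k)) a"
proof -
  let ?n = "nk k" and ?n' = "nk k + N"
  have nn: "?n \<le> ?n'" by simp
  let ?G = "GG ?n" and ?A' = "Aa ?n'"
  have l2: "IND ?G ?A' (GG ?n')" "\<forall>x\<in>Aa ?n. \<exists>y\<in>?A'. \<exists>j<rt ?G ?A' y. (?G ^^ j) y = x"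
    using lev2[OF nn] by blast+
  have yA: "y \<in> Aa ?n" using VK_basic(1)[OF VKn] y by blast
  obtain y' h where y': "y' \<in> ?A'" "h < rt ?G ?A' y'" "(?G ^^ h) y' = y" using l2(2) yA by blast
  have Hb: "\<And>w. w \<in> ?A' \<Longrightarrow> rt ?G ?A' w \<le> CARD('a) * K"
  proof -
    fix w assume w: "w \<in> ?A'"
    obtain c where c: "w \<in> Sb (Zd ?n') c" using VK_basic(3)[OF VKn] w by blast
    have "rt ?G ?A' w = (\<Sum>b\<in>UNIV. card {i. i < rt ?G ?A' w \<and> (?G ^^ i) w \<in> Sb (Zd ?n) b})"
      using H_sum[OF nn w] .
    also have "\<dots> = (\<Sum>b\<in>UNIV. Zmat s ?n ?n' c b)" using count_cell[OF nn c] by simp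
    also have "\<dots> \<le> (\<Sum>b\<in>(UNIV::'a set). K)" by (rule sum_mono) (use Zb in blast)
    finally show "rt ?G ?A' w \<le> CARD('a) * K" by simp
  qed
  let ?H = "rt ?G ?A' y'"
  let ?z = "(?G ^^ ?H) y'"
  have z: "?z \<in> ?A'" using l2(1) y'(1) unfolding IND_def by auto
  obtain c' where c': "?z \<in> Sb (Zd ?n') c'" using VK_basic(3)[OF VKn] z by blast
  have "card {i. i < rt ?G ?A' ?z \<and> (?G ^^ i) ?z \<in> Sb (Zd ?n) a} \<ge> 1"
    using count_cell[OF nn c'] Zb by simp
  hence "{i. i < rt ?G ?A' ?z \<and> (?G ^^ i) ?z \<in> Sb (Zd ?n) a} \<noteq> {}" by (metis card.empty not_one_le_zero)
  then obtain l where l: "l < rt ?G ?A' ?z" "(?G ^^ l) ?z \<in> Sb (Zd ?n) a" by blast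
  define e where "e = ?H - h + l"
  have "(?G ^^ e) y = (?G ^^ (e + h)) y'" using y'(3) by (simp add: fpa)
  also have "e + h = l + ?H" unfolding e_def using y'(2) by simp
  also have "(?G ^^ (l + ?H)) y' = (?G ^^ l) ?z" by (simp add: fpa)
  finally have ey: "(?G ^^ e) y \<in> Sb (Zd ?n) a" using l(2) by simp
  have "e \<le> ?H + rt ?G ?A' ?z" unfolding e_def using l(1) by simp
  also have "\<dots> \<le> 2 * (CARD('a) * K)" using Hb[OF y'(1)] Hb[OF z] by simp
  finally show ?thesis using ey y'(2) unfolding e_def by (intro exI[of _ "?H - h + l"]) auto
qed

lemma Bnn: "B \<ge> 0" unfolding B_def vnorm_def using Vpos by (simp add: sum_nonneg)

lemma main_bound:
  assumes x: "x \<in> Ax s"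
  shows "\<exists>m y. y \<in> Aa (nk k) \<and> m \<ge> rt F (Aa (nk k)) y \<and>
     \<bar>\<Sum>j<m. f ((F ^^ j) x)\<bar> \<le> real (2 * (CARD('a) * K)) * B"
proof -
  let ?n = "nk k"
  let ?A = "Aa ?n" and ?G = "GG ?n"
  have ind: "IND F ?A ?G" using INDn .
  obtain y i where y: "y \<in> ?A" "i < rt F ?A y" "(F ^^ i) y = x" using lev x by blast
  obtain a where a: "y \<in> Sb (Zd ?n) a" using VK_basic(3)[OF VKn] y(1) by blast
  obtain e where e: "1 \<le> e" "e \<le> 2 * (CARD('a) * K)" "(?G ^^ e) y \<in> Sb (Zd ?n) a"
    using next_visit[OF a] by blast
  define m where "m = rho F ?A ?G y e"
  define y2 where "y2 = (F ^^ m) y"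
  have y2e: "y2 = (?G ^^ e) y" unfolding y2_def m_def using rho_F[OF ind y(1)] .
  have S1: "(\<Sum>j<i+m. f ((F ^^ j) y)) = (\<Sum>j<i. f ((F ^^ j) y)) + (\<Sum>j<m. f ((F ^^ j) x))"
  proof -
    have "(\<Sum>j<i+m. f ((F ^^ j) y)) = (\<Sum>j<i. f ((F ^^ j) y)) + (\<Sum>j<m. f ((F ^^ (i + j)) y))"
      by (rule sum_lessThan_add)
    also have "(\<Sum>j<m. f ((F ^^ (i + j)) y)) = (\<Sum>j<m. f ((F ^^ j) x))"
    proof (rule sum.cong)
      fix j
      have "(F ^^ (i + j)) y = (F ^^ j) ((F ^^ i) y)" by (metis add.commute fpa)
      thus "f ((F ^^ (i + j)) y) = f ((F ^^ j) x)" using y(3) by simp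
    qed simp
    finally show ?thesis .
  qed
  have S2: "(\<Sum>j<m+i. f ((F ^^ j) y)) = (\<Sum>j<m. f ((F ^^ j) y)) + (\<Sum>j<i. f ((F ^^ j) y2))"
  proof -
    have "(\<Sum>j<m+i. f ((F ^^ j) y)) = (\<Sum>j<m. f ((F ^^ j) y)) + (\<Sum>j<i. f ((F ^^ (m + j)) y))"
      by (rule sum_lessThan_add)
    also have "(\<Sum>j<i. f ((F ^^ (m + j)) y)) = (\<Sum>j<i. f ((F ^^ j) y2))"
    proof (rule sum.cong)
      fix j
      have "(F ^^ (m + j)) y = (F ^^ j) ((F ^^ m) y)" by (metis add.commute fpa)
      thus "f ((F ^^ (m + j)) y) = f ((F ^^ j) y2)" unfolding y2_def by simp
    qed simp
    finally show ?thesis .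
  qed
  have S3: "(\<Sum>j<i. f ((F ^^ j) y2)) = (\<Sum>j<i. f ((F ^^ j) y))"
  proof -
    have eq: "EQV F ?A (Sb s) y y2" using lev a e(3) y2e by blast
    show ?thesis
    proof (rule sum.cong)
      fix j assume "j \<in> {..<i}"
      hence "j < rt F ?A y" using y(2) by simp
      then obtain b where "(F ^^ j) y \<in> Sb s b" "(F ^^ j) y2 \<in> Sb s b" using eq unfolding EQV_def by blast
      thus "f ((F ^^ j) y2) = f ((F ^^ j) y)" using f_cell by simp
    qed simp
  qed
  have Sx: "(\<Sum>j<m. f ((F ^^ j) x)) = (\<Sum>j<m. f ((F ^^ j) y))"
    using S1 S2 S3 by (simp add: add.commute)
  also have "\<dots> = (\<Sum>l<e. \<Sum>j<rt F ?A ((?G ^^ l) y). f ((F ^^ j) ((?G ^^ l) y)))"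
    unfolding m_def by (rule sum_rho[OF ind y(1)])
  finally have Sx': "(\<Sum>j<m. f ((F ^^ j) x)) = (\<Sum>l<e. \<Sum>j<rt F ?A ((?G ^^ l) y). f ((F ^^ j) ((?G ^^ l) y)))" .
  have "\<bar>\<Sum>l<e. \<Sum>j<rt F ?A ((?G ^^ l) y). f ((F ^^ j) ((?G ^^ l) y))\<bar>
        \<le> (\<Sum>l<e. \<bar>\<Sum>j<rt F ?A ((?G ^^ l) y). f ((F ^^ j) ((?G ^^ l) y))\<bar>)"
    by (rule sum_abs)
  also have "\<dots> \<le> (\<Sum>l<e. B)"
    by (rule sum_mono) (rule beta_bound[OF IND_G[OF ind y(1)]])
  also have "\<dots> = real e * B" by simp
  also have "\<dots> \<le> real (2 * (CARD('a) * K)) * B"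
  proof -
    have "real e \<le> real (2 * (CARD('a) * K))" using e(2) by (simp only: of_nat_le_iff)
    thus ?thesis using Bnn by (rule mult_right_mono)
  qed
  finally have bound: "\<bar>\<Sum>j<m. f ((F ^^ j) x)\<bar> \<le> real (2 * (CARD('a) * K)) * B" using Sx' by simp
  have "rho F ?A ?G y 1 \<le> m" unfolding m_def using rho_mono_le[OF ind y(1) e(1)] .
  hence "m \<ge> rt F ?A y" by simp
  thus ?thesis using bound y(1) by blast
qed

definition "PP q n \<longleftrightarrow> (\<forall>w\<in>Aa n. rt F (Aa n) w \<ge> q)"

lemma PP_mono:
  assumes "n \<le> n'" "PP q n"
  shows "PP q n'"
  unfolding PP_def
proof
  fix w assume w: "w \<in> Aa n'"
  have wA: "w \<in> Aa n" using sub_A[OF assms(1)] w by blast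
  have r: "ret F (Aa n') w (rt F (Aa n') w)" using INDn[of n'] w unfolding IND_def by blast
  have "rt F (Aa n) w \<le> rt F (Aa n') w"
    unfolding rt_def[of F "Aa n"]
    by (rule Least_le) (use r sub_A[OF assms(1)] in \<open>auto simp: ret_def rt_def\<close>)
  thus "rt F (Aa n') w \<ge> q" using assms(2) wA unfolding PP_def by force
qed

lemma PP_double:
  assumes "PP q (nk k)"
  shows "PP (2 * q) (nk k + N)"
  unfolding PP_def
proof
  let ?n = "nk k" and ?n' = "nk k + N"
  have nn: "?n \<le> ?n'" by simp
  fix w assume w: "w \<in> Aa ?n'"
  let ?G = "GG ?n" and ?A = "Aa ?n" and ?A' = "Aa ?n'"
  have sub: "?A' \<subseteq> ?A" using sub_A[OF nn] .
  have ind2: "IND ?G ?A' (GG ?n')" using lev2[OF nn] by blast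
  have wA: "w \<in> ?A" using sub w by blast
  obtain c where c: "w \<in> Sb (Zd ?n') c" using VK_basic(3)[OF VKn] w by blast
  have "rt ?G ?A' w = (\<Sum>b\<in>UNIV. card {i. i < rt ?G ?A' w \<and> (?G ^^ i) w \<in> Sb (Zd ?n) b})"
    using H_sum[OF nn w] .
  also have "\<dots> = (\<Sum>b\<in>UNIV. Zmat s ?n ?n' c b)" using count_cell[OF nn c] by simp
  also have "\<dots> \<ge> (\<Sum>b\<in>(UNIV::'a set). 1)" by (rule sum_mono) (use Zb in blast)
  finally have H2: "rt ?G ?A' w \<ge> 2" using c2 by simp
  have "rt F ?A' w = rho F ?A ?G w (rt ?G ?A' w)" using IND_comp[OF INDn sub ind2 w] by blast
  also have "\<dots> \<ge> rho F ?A ?G w 2" using rho_mono_le[OF INDn wA H2] .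
  finally have "rt F ?A' w \<ge> rt F ?A w + rt F ?A (?G w)" by (simp add: numeral_2_eq_2)
  moreover have "rt F ?A w \<ge> q" using assms wA unfolding PP_def by blast
  moreover have "rt F ?A (?G w) \<ge> q" using assms IND_G[OF INDn wA, of 1] unfolding PP_def by simp
  ultimately show "rt F ?A' w \<ge> 2 * q" by simp
qed

lemma nk_add: "nk (k + j) \<ge> nk k + j"
proof (induction j)
  case (Suc j)
  have "nk (k + j) < nk (k + Suc j)" using nk unfolding strict_mono_def by simp
  thus ?case using Suc by simp
qed simp

lemma PP_grow: "\<exists>k. PP (2 ^ j) (nk k)"
proof (induction j)
  case 0
  have "PP 1 (nk 0)" unfolding PP_def using IND_rt_pos[OF INDn] by (simp add: Suc_le_eq)
  thus ?case by auto
next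
  case (Suc j)
  then obtain k where "PP (2 ^ j) (nk k)" by blast
  hence "PP (2 * 2 ^ j) (nk k + N)" by (rule PP_double)
  hence "PP (2 * 2 ^ j) (nk (k + N))" using PP_mono nk_add by blast
  thus ?case by auto
qed

lemma recur:
  assumes x: "x \<in> Ax s"
  shows "\<exists>m\<ge>l. \<bar>\<Sum>j<m. f ((F ^^ j) x)\<bar> \<le> real (2 * (CARD('a) * K)) * B"
proof -
  obtain k where k: "PP (2 ^ l) (nk k)" using PP_grow by blast
  obtain m y where my: "y \<in> Aa (nk k)" "m \<ge> rt F (Aa (nk k)) y"
    "\<bar>\<Sum>j<m. f ((F ^^ j) x)\<bar> \<le> real (2 * (CARD('a) * K)) * B"
    using main_bound[OF x] by blast
  have "l \<le> 2 ^ l" using less_exp[of l] by simp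
  also have "\<dots> \<le> m" using k my unfolding PP_def by force
  finally show ?thesis using my(3) by blast
qed

end

lemma abs_bound: "(\<forall>l. l \<le> M l) \<Longrightarrow> \<bar>k\<bar> \<le> \<bar>int (M (nat \<bar>k\<bar>))\<bar>"
proof -
  assume "\<forall>l. l \<le> M l"
  hence "nat \<bar>k\<bar> \<le> M (nat \<bar>k\<bar>)" by blast
  thus ?thesis by linarith
qed

lemma lim_top: "(\<forall>l. l \<le> M l) \<Longrightarrow> filterlim (\<lambda>k::int. \<bar>int (M (nat \<bar>k\<bar>))\<bar>) at_top at_top"
  unfolding filterlim_at_top eventually_at_top_linorder
proof (intro allI)
  fix Z :: int assume h: "\<forall>l. l \<le> M l"
  show "\<exists>N. \<forall>n\<ge>N. Z \<le> \<bar>int (M (nat \<bar>n\<bar>))\<bar>"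
  proof (intro exI allI impI)
    fix n assume "n \<ge> max Z 0"
    thus "Z \<le> \<bar>int (M (nat \<bar>n\<bar>))\<bar>" using abs_bound[OF h, of n] by linarith
  qed
qed

lemma lim_bot: "(\<forall>l. l \<le> M l) \<Longrightarrow> filterlim (\<lambda>k::int. \<bar>int (M (nat \<bar>k\<bar>))\<bar>) at_top at_bot"
  unfolding filterlim_at_top eventually_at_bot_linorder
proof (intro allI)
  fix Z :: int assume h: "\<forall>l. l \<le> M l"
  show "\<exists>N. \<forall>n\<le>N. Z \<le> \<bar>int (M (nat \<bar>n\<bar>))\<bar>"
  proof (intro exI allI impI)
    fix n assume "n \<le> - \<bar>Z\<bar>"
    thus "Z \<le> \<bar>int (M (nat \<bar>n\<bar>))\<bar>" using abs_bound[OF h, of n] by linarith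
  qed
qed

lemma birk_pos: "birkhoff pt pb lam g (int m) x = (\<Sum>j<m. g ((iet_map pt pb lam ^^ j) x))"
  unfolding birkhoff_def by simp

lemma one_fixed:
  assumes "valid_iet pt pb lam"
  shows "iet_map pt pb lam 1 = 1" "f_iet pt lam \<omega> 1 = 0"
proof -
  have nn: "\<forall>a. lam a \<ge> 0" using assms unfolding valid_iet_def by (simp add: less_imp_le)
  have "\<And>a. 1 \<notin> subint pt lam a" using subint_sub[OF nn] assms unfolding valid_iet_def by fastforce
  thus "iet_map pt pb lam 1 = 1" "f_iet pt lam \<omega> 1 = 0" unfolding iet_map_def f_iet_def by simp_all
qed

theorem corollary4p3:
  fixes pt pb :: "'a::finite \<Rightarrow> nat" and lam :: "'a \<Rightarrow> real"
    and \<omega> :: "'a \<Rightarrow> real" and x :: real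
  assumes "BC_condition (pt, pb, lam)"
    and "\<omega> \<in> E_cs (pt, pb, lam)"
    and "0 \<le> x" and "x \<le> 1"
  shows "\<exists>m :: int \<Rightarrow> int.
           filterlim (\<lambda>k. \<bar>m k\<bar>) at_top at_top \<and>
           filterlim (\<lambda>k. \<bar>m k\<bar>) at_top at_bot \<and>
           (\<exists>C. \<forall>k. \<bar>birkhoff pt pb lam (f_iet pt lam \<omega>) (m k) x\<bar> \<le> C)"
proof -
  have bc: "valid_iet pt pb lam \<and> keane pt pb lam \<and> inf_complete (pt, pb, lam) \<and>
     (\<exists>nk :: nat \<Rightarrow> nat. strict_mono nk \<and>
        (\<exists>N::nat. \<exists>K::nat. K > 0 \<and> (\<forall>k a b. 1 \<le> Zmat (pt, pb, lam) (nk k) (nk k + N) a b \<and>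
                                              Zmat (pt, pb, lam) (nk k) (nk k + N) a b \<le> K)) \<and>
        (\<exists>V>0. \<forall>k. \<forall>v\<in>E_cs (pt, pb, lam). vnorm (matvec (Zmat (pt, pb, lam) 0 (nk k)) v) \<le> V * vnorm v))"
    using assms(1) unfolding BC_condition_def prod.case by blast
  have vi: "valid_iet pt pb lam" and kn: "keane pt pb lam" and ic: "inf_complete (pt, pb, lam)"
    using bc by simp_all
  from bc have "\<exists>nk :: nat \<Rightarrow> nat. strict_mono nk \<and>
        (\<exists>N::nat. \<exists>K::nat. K > 0 \<and> (\<forall>k a b. 1 \<le> Zmat (pt, pb, lam) (nk k) (nk k + N) a b \<and>
                                              Zmat (pt, pb, lam) (nk k) (nk k + N) a b \<le> K)) \<and>
        (\<exists>V>0. \<forall>k. \<forall>v\<in>E_cs (pt, pb, lam). vnorm (matvec (Zmat (pt, pb, lam) 0 (nk k)) v) \<le> V * vnorm v)"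
    by (elim conjE)
  then obtain nk :: "nat \<Rightarrow> nat" where nkh: "strict_mono nk \<and>
        (\<exists>N::nat. \<exists>K::nat. K > 0 \<and> (\<forall>k a b. 1 \<le> Zmat (pt, pb, lam) (nk k) (nk k + N) a b \<and>
                                              Zmat (pt, pb, lam) (nk k) (nk k + N) a b \<le> K)) \<and>
        (\<exists>V>0. \<forall>k. \<forall>v\<in>E_cs (pt, pb, lam). vnorm (matvec (Zmat (pt, pb, lam) 0 (nk k)) v) \<le> V * vnorm v)"
    by (elim exE)
  hence nk: "strict_mono nk" by (elim conjE)
  from nkh obtain N K where K: "K > 0"
    and Zb: "\<forall>k a b. 1 \<le> Zmat (pt, pb, lam) (nk k) (nk k + N) a b \<and> Zmat (pt, pb, lam) (nk k) (nk k + N) a b \<le> K"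
    by (elim conjE exE)
  from nkh obtain V where V: "V > 0" and Vb: "\<forall>k. \<forall>v\<in>E_cs (pt, pb, lam). vnorm (matvec (Zmat (pt, pb, lam) 0 (nk k)) v) \<le> V * vnorm v"
    by (elim conjE exE)
  interpret mc pt pb lam \<omega> nk N K V
    using vi kn ic nk K Zb V Vb assms(2) by unfold_locales
  have "\<exists>M C. (\<forall>l. l \<le> M l) \<and> (\<forall>l. \<bar>birkhoff pt pb lam (f_iet pt lam \<omega>) (int (M l)) x\<bar> \<le> C)"
  proof (cases "x = 1")
    case True
    have it: "\<And>j. (iet_map pt pb lam ^^ j) 1 = 1"
    proof -
      fix j show "(iet_map pt pb lam ^^ j) 1 = (1::real)"
        by (induction j) (simp_all add: one_fixed(1)[OF vi])
    qed
    have "\<forall>l. \<bar>birkhoff pt pb lam (f_iet pt lam \<omega>) (int l) x\<bar> \<le> 0"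
      unfolding birk_pos True it using one_fixed(2)[OF vi] by simp
    thus ?thesis by (intro exI[of _ "\<lambda>l. l"] exI[of _ 0]) simp
  next
    case False
    hence xA: "x \<in> Ax (pt, pb, lam)" using assms(3,4) Lz1 unfolding Ax_def by simp
    let ?C = "real (2 * (CARD('a) * K)) * B"
    have "\<forall>l. \<exists>m. l \<le> m \<and> \<bar>birkhoff pt pb lam (f_iet pt lam \<omega>) (int m) x\<bar> \<le> ?C"
      using recur[OF xA] unfolding birk_pos T0_def by simp
    then obtain M where "\<forall>l. l \<le> M l \<and> \<bar>birkhoff pt pb lam (f_iet pt lam \<omega>) (int (M l)) x\<bar> \<le> ?C"
      by metis
    thus ?thesis by blast
  qed
  then obtain M C where M: "\<forall>l. l \<le> M l" and C: "\<forall>l. \<bar>birkhoff pt pb lam (f_iet pt lam \<omega>) (int (M l)) x\<bar> \<le> C"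
    by blast
  show ?thesis
    using lim_top[OF M] lim_bot[OF M] C
    by (intro exI[of _ "\<lambda>k. int (M (nat \<bar>k\<bar>))"] conjI exI[of _ C]) auto
qed

end
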